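(* Let $d\ge 0$ be a fixed integer and let $\{G_n\}_{n=1}^{\infty}$ be a sequence of finite simple graphs, each regular of degree $d$, such that $|V(G_n)|$ increases with $n$. Then the Laplacian coefficients $c(\widehat{G_n},k)$ of the cones $\widehat{G_n}$ are asymptotically normal (by central and local limit theorems).
   Context: The cone $\widehat{G}$ over a graph $G$ is the graph obtained from $G$ by adding one new vertex adjacent to every vertex of $G$. For a finite simple graph $H$ with $N$ vertices, let $L(H)=D(H)-A(H)$ be its Laplacian matrix ($D(H)$ the diagonal degree matrix, $A(H)$ the adjacency matrix), and write $\det(xI-L(H))=\sum_{k=0}^{N}(-1)^{N-k}c(H,k)x^k$; the numbers $c(H,k)\ge 0$ are the Laplacian coefficients. For $H_n=\widehat{G_n}$ with $N_n=|V(H_n)|$, let $p(n,k)=c(H_n,k)/\sum_{j=0}^{N_n}c(H_n,j)$, and let $\mu_n$, $\sigma_n^2$ be the mean and variance of the distribution $(p(n,k))_k$. Asymptotic normality by a central limit theorem means $\lim_{n\to\infty}\sup_{x\in\mathbb{R}}\left|\sum_{k\le \mu_n+x\sigma_n}p(n,k)-\frac{1}{\sqrt{2\pi}}\int_{-\infty}^x e^{-t^2/2}dt\right|=0$; by a local limit theorem means $\lim_{n\to\infty}\sup_{x\in\mathbb{R}}\left|\sigma_n p(n,\lfloor\mu_n+x\sigma_n\rfloor)-\frac{1}{\sqrt{2\pi}}e^{-x^2/2}\right|=0$. *)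

theory Defs
  imports "HOL-Analysis.Analysis" "Jordan_Normal_Form.Char_Poly"
begin

text \<open>A finite simple graph on vertex set {0..<N} is given by N and a symmetric,
irreflexive adjacency relation E (only its restriction to {0..<N} matters).\<close>

definition simple_graph :: "nat \<Rightarrow> (nat \<Rightarrow> nat \<Rightarrow> bool) \<Rightarrow> bool" where
  "simple_graph N E \<longleftrightarrow> (\<forall>i<N. \<forall>j<N. E i j \<longleftrightarrow> E j i) \<and> (\<forall>i<N. \<not> E i i)"

definition graph_degree :: "nat \<Rightarrow> (nat \<Rightarrow> nat \<Rightarrow> bool) \<Rightarrow> nat \<Rightarrow> nat" where
  "graph_degree N E v = card {u. u < N \<and> E v u}"

definition regular_graph :: "nat \<Rightarrow> (nat \<Rightarrow> nat \<Rightarrow> bool) \<Rightarrow> nat \<Rightarrow> bool" where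
  "regular_graph N E d \<longleftrightarrow> (\<forall>v<N. graph_degree N E v = d)"

text \<open>Cone: new vertex N adjacent to all vertices 0..<N; vertex set {0..<N+1}.\<close>
definition cone_adj :: "nat \<Rightarrow> (nat \<Rightarrow> nat \<Rightarrow> bool) \<Rightarrow> nat \<Rightarrow> nat \<Rightarrow> bool" where
  "cone_adj N E i j \<longleftrightarrow>
     (i < N \<and> j < N \<and> E i j) \<or> (i = N \<and> j < N) \<or> (j = N \<and> i < N)"

definition laplacian :: "nat \<Rightarrow> (nat \<Rightarrow> nat \<Rightarrow> bool) \<Rightarrow> real mat" where
  "laplacian N E = mat N N (\<lambda>(i, j).
      (if i = j then real (graph_degree N E i) else 0) - (if E i j then 1 else 0))"

text \<open>det(xI - L) = sum_k (-1)^(N-k) c(H,k) x^k.\<close>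
definition lap_coeff :: "nat \<Rightarrow> (nat \<Rightarrow> nat \<Rightarrow> bool) \<Rightarrow> nat \<Rightarrow> real" where
  "lap_coeff N E k = (-1) ^ (N - k) * coeff (char_poly (laplacian N E)) k"

definition lap_dist :: "nat \<Rightarrow> (nat \<Rightarrow> nat \<Rightarrow> bool) \<Rightarrow> int \<Rightarrow> real" where
  "lap_dist N E k = (if 0 \<le> k \<and> k \<le> int N
      then lap_coeff N E (nat k) / (\<Sum>j\<le>N. lap_coeff N E j) else 0)"

definition lap_mean :: "nat \<Rightarrow> (nat \<Rightarrow> nat \<Rightarrow> bool) \<Rightarrow> real" where
  "lap_mean N E = (\<Sum>k\<le>N. real k * lap_dist N E (int k))"

definition lap_var :: "nat \<Rightarrow> (nat \<Rightarrow> nat \<Rightarrow> bool) \<Rightarrow> real" where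
  "lap_var N E = (\<Sum>k\<le>N. (real k - lap_mean N E)\<^sup>2 * lap_dist N E (int k))"

definition std_normal_cdf :: "real \<Rightarrow> real" where
  "std_normal_cdf x = (1 / sqrt (2 * pi)) * (LBINT t:{..x}. exp (- t\<^sup>2 / 2))"

definition asymp_normal_CLT :: "(nat \<Rightarrow> nat) \<Rightarrow> (nat \<Rightarrow> int \<Rightarrow> real) \<Rightarrow> (nat \<Rightarrow> real) \<Rightarrow> (nat \<Rightarrow> real) \<Rightarrow> bool" where
  "asymp_normal_CLT N p \<mu> \<sigma> \<longleftrightarrow>
     (\<lambda>n. SUP x::real. \<bar>(\<Sum>k\<in>{k. k \<le> N n \<and> real k \<le> \<mu> n + x * \<sigma> n}. p n (int k))
                          - std_normal_cdf x\<bar>) \<longlonglongrightarrow> 0"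

definition asymp_normal_LLT :: "(nat \<Rightarrow> int \<Rightarrow> real) \<Rightarrow> (nat \<Rightarrow> real) \<Rightarrow> (nat \<Rightarrow> real) \<Rightarrow> bool" where
  "asymp_normal_LLT p \<mu> \<sigma> \<longleftrightarrow>
     (\<lambda>n. SUP x::real. \<bar>\<sigma> n * p n \<lfloor>\<mu> n + x * \<sigma> n\<rfloor>
                          - (1 / sqrt (2 * pi)) * exp (- x\<^sup>2 / 2)\<bar>) \<longlonglongrightarrow> 0"

end

theory Submission
  imports Defs "HOL-Probability.Probability" "HOL-Computational_Algebra.Polynomial" "Jordan_Normal_Form.Schur_Decomposition"
begin

lemma cos_taylor_bound: "\<bar>cos (t::real) - 1 + t\<^sup>2/2\<bar> \<le> t\<^sup>2 * t\<^sup>2 / 24"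
proof -
  have ap: "cmod (iexp t - (\<Sum>k\<le>3. (\<i> * complex_of_real t) ^ k / fact k)) \<le> \<bar>t\<bar> ^ 4 / 24"
    using iexp_approx1[of t 3] by (simp add: fact_numeral)
  have "\<bar>Re (iexp t - (\<Sum>k\<le>3. (\<i> * complex_of_real t) ^ k / fact k))\<bar> \<le> \<bar>t\<bar> ^ 4 / 24"
    using abs_Re_le_cmod ap order_trans by blast
  moreover have "Re (iexp t - (\<Sum>k\<le>3. (\<i> * complex_of_real t) ^ k / fact k)) = cos t - 1 + t\<^sup>2/2"
    by (simp add: Re_exp fact_numeral numeral_3_eq_3 power2_eq_square)
  moreover have "\<bar>t\<bar> ^ 4 = t\<^sup>2 * t\<^sup>2" by (simp add: power2_eq_square power4_eq_xxxx)
  ultimately show ?thesis by simp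
qed

lemma one_minus_cos_ge: assumes "\<bar>t\<bar> \<le> pi" shows "t\<^sup>2 / 16 \<le> 1 - cos (t::real)"
proof (cases "\<bar>t\<bar> \<le> 2")
  case True
  have "t\<^sup>2 \<le> 2\<^sup>2" using True by (metis abs_le_square_iff abs_numeral)
  then have "t\<^sup>2 * t\<^sup>2 \<le> t\<^sup>2 * 4" by (intro mult_left_mono) auto
  with cos_taylor_bound[of t] zero_le_power2[of t] show ?thesis by linarith
next
  case False
  have "\<bar>cos (2::real) - 1 + 2\<^sup>2/2\<bar> \<le> (2::real)\<^sup>2 * 2\<^sup>2 / 24" by (rule cos_taylor_bound)
  then have "cos (2::real) - 1 + 2\<^sup>2/2 \<le> (2::real)\<^sup>2 * 2\<^sup>2 / 24" by (rule abs_le_D1)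
  then have c2: "cos (2::real) \<le> - 1/3" by (simp add: power2_eq_square)
  have "cos t = cos \<bar>t\<bar>" by (simp add: abs_if)
  also have "\<dots> \<le> cos (2::real)" using False assms by (intro cos_monotone_0_pi_le) auto
  finally have "1 - cos t \<ge> 4/3" using c2 by linarith
  moreover have "t\<^sup>2 \<le> pi\<^sup>2" using assms by (metis abs_le_square_iff abs_of_nonneg pi_ge_zero)
  moreover have "pi\<^sup>2 \<le> 16" using pi_less_4 pi_gt3 power_mono[of pi 4 2] by simp
  ultimately show ?thesis by linarith
qed

lemma bern_factor_norm:
  fixes q t :: real assumes "0 \<le> q" "q \<le> 1"
  shows "cmod (1 - complex_of_real q + complex_of_real q * iexp t) \<le> exp (- (q*(1-q)) * (1 - cos t))"
proof -
  have s: "(sin t)\<^sup>2 = 1 - (cos t)\<^sup>2" by (simp add: sin_squared_eq)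
  have "(cmod (1 - complex_of_real q + complex_of_real q * iexp t))\<^sup>2 = (1 - q + q * cos t)\<^sup>2 + (q * sin t)\<^sup>2"
    by (simp add: cmod_power2 Re_exp Im_exp)
  also have "\<dots> = (1 - q + q * cos t)\<^sup>2 + q\<^sup>2 * (1 - (cos t)\<^sup>2)"
    by (simp only: power_mult_distrib s)
  also have "\<dots> = 1 - 2*(q*(1-q))*(1 - cos t)"
    by (simp add: power2_eq_square algebra_simps)
  also have "\<dots> \<le> exp (- (2*(q*(1-q))*(1 - cos t)))"
    using exp_ge_add_one_self[of "- (2*(q*(1-q))*(1 - cos t))"] by simp
  also have "\<dots> = (exp (- (q*(1-q)) * (1 - cos t)))\<^sup>2"
    by (simp add: exp_double[symmetric] algebra_simps)
  finally show ?thesis by (rule power2_le_imp_le) simp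
qed

lemma exp_neg_upper: assumes "(0::real) \<le> a" shows "exp (- a) \<le> 1 - a + a\<^sup>2/2"
proof -
  let ?g = "\<lambda>a::real. 1 - a + a\<^sup>2/2 - exp (- a)"
  have d: "\<And>x. (?g has_real_derivative (- 1 + x + exp (- x))) (at x)"
    by (auto intro!: derivative_eq_intros simp: power2_eq_square)
  have "?g 0 \<le> ?g a"
  proof (rule DERIV_nonneg_imp_nondecreasing[OF assms])
    fix x assume "0 \<le> x" "x \<le> a"
    show "\<exists>y. (?g has_real_derivative y) (at x) \<and> 0 \<le> y"
      using d[of x] exp_ge_add_one_self[of "-x"] by auto
  qed
  then show ?thesis by simp
qed

lemma exp_neg_approx: assumes "(0::real) \<le> a" shows "\<bar>exp (- a) - (1 - a)\<bar> \<le> a\<^sup>2/2"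
  using exp_neg_upper[OF assms] exp_ge_add_one_self[of "-a"] by (simp add: abs_le_iff)

lemma iexp_taylor2: "cmod (iexp x - (complex_of_real (1 - x\<^sup>2/2) + \<i> * complex_of_real x)) \<le> \<bar>x\<bar>^3/6"
proof -
  have "(\<Sum>k\<le>2. (\<i> * complex_of_real x) ^ k / fact k) = complex_of_real (1 - x\<^sup>2/2) + \<i> * complex_of_real x"
    by (simp add: numeral_2_eq_2 fact_numeral power_mult_distrib)
  with iexp_approx1[of x 2] show ?thesis by (simp add: fact_numeral numeral_3_eq_3)
qed

lemma q_var_le: assumes "0 \<le> (q::real)" "q \<le> 1" shows "0 \<le> q*(1-q)" "q*(1-q) \<le> 1/4"
proof -
  show "0 \<le> q*(1-q)" using assms by simp
  have "0 \<le> (q - 1/2)\<^sup>2" by simp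
  then show "q*(1-q) \<le> 1/4" by (simp add: power2_eq_square algebra_simps)
qed

lemma norm_ofreal_mult: "0 \<le> a \<Longrightarrow> cmod (complex_of_real a * z) = a * cmod z"
  by (simp only: norm_mult norm_of_real abs_of_nonneg)

lemma bern_factor_taylor:
  fixes q t :: real assumes q: "0 \<le> q" "q \<le> 1" and t: "\<bar>t\<bar> \<le> 1"
  shows "cmod (iexp (- q * t) * (1 - complex_of_real q + complex_of_real q * iexp t)
              - complex_of_real (exp (- (q*(1-q) * t\<^sup>2 / 2)))) \<le> q*(1-q) * \<bar>t\<bar>^3"
proof -
  define v where "v = q*(1-q)"
  have v0: "0 \<le> v" and v4: "v \<le> 1/4" using q_var_le[OF q] unfolding v_def by auto
  define T where "T = (\<lambda>x::real. complex_of_real (1 - x\<^sup>2/2) + \<i> * complex_of_real x)"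
  define R where "R = (\<lambda>x::real. iexp x - T x)"
  have R: "cmod (R x) \<le> \<bar>x\<bar>^3/6" for x unfolding R_def T_def by (rule iexp_taylor2)
  have e1: "iexp (- q * t) * (1 - complex_of_real q + complex_of_real q * iexp t)
      = complex_of_real (1-q) * iexp (- q * t) + complex_of_real q * iexp ((1-q)*t)"
    by (simp add: algebra_simps exp_add[symmetric])
  also have "\<dots> = complex_of_real (1-q) * T (- q * t) + complex_of_real q * T ((1-q)*t)
                  + (complex_of_real (1-q) * R (- q * t) + complex_of_real q * R ((1-q)*t))"
    unfolding R_def by (simp add: algebra_simps)
  also have "complex_of_real (1-q) * T (- q * t) + complex_of_real q * T ((1-q)*t)
     = complex_of_real ((1-q) * (1 - (- q * t)\<^sup>2/2) + q * (1 - ((1-q)*t)\<^sup>2/2))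
       + \<i> * complex_of_real ((1-q) * (- q * t) + q * ((1-q)*t))"
    unfolding T_def by (simp add: algebra_simps)
  also have "(1-q) * (1 - (- q * t)\<^sup>2/2) + q * (1 - ((1-q)*t)\<^sup>2/2) = 1 - v * t\<^sup>2/2"
    unfolding v_def by (simp add: power2_eq_square field_simps)
  also have "(1-q) * (- q * t) + q * ((1-q)*t) = 0" by (simp add: algebra_simps)
  finally have e: "iexp (- q * t) * (1 - complex_of_real q + complex_of_real q * iexp t) - complex_of_real (1 - v * t\<^sup>2/2)
     = complex_of_real (1-q) * R (- q * t) + complex_of_real q * R ((1-q)*t)" by simp
  have a1: "\<bar>- q * t\<bar> = q * \<bar>t\<bar>" using q by (simp add: abs_mult)
  have a2: "\<bar>(1-q) * t\<bar> = (1-q) * \<bar>t\<bar>" using q by (simp add: abs_mult)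
  have "cmod (complex_of_real (1-q) * R (- q * t) + complex_of_real q * R ((1-q)*t))
        \<le> cmod (complex_of_real (1-q) * R (- q * t)) + cmod (complex_of_real q * R ((1-q)*t))"
    by (rule norm_triangle_ineq)
  also have "\<dots> = (1-q) * cmod (R (- q * t)) + q * cmod (R ((1-q)*t))"
    using q by (simp only: norm_ofreal_mult)
  also have "\<dots> \<le> (1-q) * (\<bar>- q * t\<bar>^3/6) + q * (\<bar>(1-q)*t\<bar>^3/6)"
    using q by (intro add_mono mult_left_mono R) auto
  also have "\<dots> = v * \<bar>t\<bar>^3 * (q\<^sup>2 + (1-q)\<^sup>2) / 6"
    unfolding a1 a2 v_def by (simp add: power_mult_distrib power2_eq_square power3_eq_cube field_simps)
  also have "\<dots> \<le> v * \<bar>t\<bar>^3 / 6"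
  proof -
    have "q\<^sup>2 + (1-q)\<^sup>2 = 1 - 2 * v" unfolding v_def by (simp add: power2_eq_square algebra_simps)
    then have "q\<^sup>2 + (1-q)\<^sup>2 \<le> 1" using v0 by simp
    then show ?thesis using v0 by (intro divide_right_mono) (auto intro: mult_left_le)
  qed
  finally have A: "cmod (iexp (- q * t) * (1 - complex_of_real q + complex_of_real q * iexp t) - complex_of_real (1 - v * t\<^sup>2/2)) \<le> v * \<bar>t\<bar>^3 / 6"
    unfolding e .
  have "\<bar>exp (- (v * t\<^sup>2/2)) - (1 - v * t\<^sup>2/2)\<bar> \<le> (v * t\<^sup>2/2)\<^sup>2/2"
    using v0 by (intro exp_neg_approx) auto
  also have "\<dots> = v * v * (t\<^sup>2 * t\<^sup>2) / 8" by (simp add: power2_eq_square)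
  also have "\<dots> \<le> v * (1/4) * \<bar>t\<bar>^3 / 8"
  proof -
    have "t\<^sup>2 * t\<^sup>2 = \<bar>t\<bar>^3 * \<bar>t\<bar>" by (simp add: power2_eq_square power3_eq_cube)
    also have "\<dots> \<le> \<bar>t\<bar>^3 * 1" using t by (intro mult_left_mono) auto
    finally have "t\<^sup>2 * t\<^sup>2 \<le> \<bar>t\<bar>^3" by simp
    moreover have "v * v \<le> v * (1/4)" using v0 v4 by (intro mult_left_mono) auto
    ultimately show ?thesis using v0 v4 by (intro divide_right_mono mult_mono) auto
  qed
  finally have Br: "\<bar>(1 - v * t\<^sup>2/2) - exp (- (v * t\<^sup>2/2))\<bar> \<le> v * \<bar>t\<bar>^3 / 32"
    by (simp add: abs_minus_commute)
  have B: "cmod (complex_of_real (1 - v * t\<^sup>2/2) - complex_of_real (exp (- (v * t\<^sup>2 / 2)))) \<le> v * \<bar>t\<bar>^3 / 32"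
    using Br by (metis norm_of_real of_real_diff)
  have "cmod (iexp (- q * t) * (1 - complex_of_real q + complex_of_real q * iexp t) - complex_of_real (exp (- (v * t\<^sup>2 / 2))))
     \<le> v * \<bar>t\<bar>^3 / 6 + v * \<bar>t\<bar>^3 / 32"
    using norm_triangle_le[OF add_mono[OF A B]] by (simp add: algebra_simps)
  also have "\<dots> \<le> v * \<bar>t\<bar>^3" using v0 by simp
  finally show ?thesis unfolding v_def by simp
qed

lemma norm_prod_list_le1:
  fixes f :: "'a \<Rightarrow> 'b::{real_normed_algebra_1, comm_monoid_mult}"
  shows "(\<And>x. x \<in> set xs \<Longrightarrow> norm (f x) \<le> 1) \<Longrightarrow> norm (prod_list (map f xs)) \<le> 1"
proof (induction xs)
  case Nil then show ?case by simp
next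
  case (Cons a xs)
  have "norm (prod_list (map f (a # xs))) \<le> norm (f a) * norm (prod_list (map f xs))"
    by (simp add: norm_mult_ineq)
  also have "\<dots> \<le> 1 * 1" using Cons by (intro mult_mono) auto
  finally show ?case by simp
qed

lemma norm_prod_list_diff:
  fixes f g :: "'a \<Rightarrow> 'b::{real_normed_algebra_1, comm_monoid_mult}"
  assumes "\<And>x. x \<in> set xs \<Longrightarrow> norm (f x) \<le> 1" "\<And>x. x \<in> set xs \<Longrightarrow> norm (g x) \<le> 1"
  shows "norm (prod_list (map f xs) - prod_list (map g xs)) \<le> sum_list (map (\<lambda>x. norm (f x - g x)) xs)"
  using assms
proof (induction xs)
  case Nil then show ?case by simp
next
  case (Cons a xs)
  let ?F = "prod_list (map f xs)" and ?G = "prod_list (map g xs)"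
  have nF: "norm ?F \<le> 1" and nG: "norm ?G \<le> 1" using Cons.prems by (auto intro!: norm_prod_list_le1)
  have "f a * ?F - g a * ?G = f a * (?F - ?G) + (f a - g a) * ?G" by (simp add: algebra_simps)
  then have "norm (f a * ?F - g a * ?G) \<le> norm (f a) * norm (?F - ?G) + norm (f a - g a) * norm ?G"
    by (metis norm_triangle_le norm_mult_ineq add_mono)
  also have "\<dots> \<le> 1 * norm (?F - ?G) + norm (f a - g a) * 1"
    using Cons.prems nG by (intro add_mono mult_mono) auto
  also have "\<dots> \<le> sum_list (map (\<lambda>x. norm (f x - g x)) xs) + norm (f a - g a)"
    using Cons by simp
  finally show ?case by simp
qed

definition chi :: "real list \<Rightarrow> real \<Rightarrow> complex" where
  "chi qs t = prod_list (map (\<lambda>q. 1 - complex_of_real q + complex_of_real q * iexp t) qs)"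

definition qvar :: "real list \<Rightarrow> real" where
  "qvar qs = sum_list (map (\<lambda>q. q * (1 - q)) qs)"

lemma qvar_Cons: "qvar (q # qs) = q * (1 - q) + qvar qs"
  by (simp add: qvar_def)

lemma qvar_nonneg: "(\<And>q. q \<in> set qs \<Longrightarrow> 0 \<le> q \<and> q \<le> 1) \<Longrightarrow> 0 \<le> qvar qs"
  unfolding qvar_def by (induction qs) (auto intro!: add_nonneg_nonneg)

lemma chi_bound:
  assumes qs: "\<And>q. q \<in> set qs \<Longrightarrow> 0 \<le> q \<and> q \<le> 1" and t: "\<bar>t\<bar> \<le> pi"
  shows "cmod (chi qs t) \<le> exp (- (qvar qs * (t\<^sup>2 / 16)))"
  using qs
proof (induction qs)
  case Nil then show ?case by (simp add: chi_def qvar_def)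
next
  case (Cons q qs)
  have q: "0 \<le> q" "q \<le> 1" using Cons.prems by auto
  have "cmod (chi (q # qs) t) = cmod (1 - complex_of_real q + complex_of_real q * iexp t) * cmod (chi qs t)"
    by (simp add: chi_def norm_mult)
  also have "\<dots> \<le> exp (- (q*(1-q)) * (1 - cos t)) * exp (- (qvar qs * (t\<^sup>2 / 16)))"
    using Cons q by (intro mult_mono bern_factor_norm) auto
  also have "\<dots> \<le> exp (- (q*(1-q) * (t\<^sup>2/16))) * exp (- (qvar qs * (t\<^sup>2 / 16)))"
  proof -
    have "q*(1-q) * (t\<^sup>2/16) \<le> q*(1-q) * (1 - cos t)"
      using one_minus_cos_ge[OF t] q_var_le[OF q] by (intro mult_left_mono) auto
    then show ?thesis by (intro mult_right_mono) auto
  qed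
  also have "\<dots> = exp (- (qvar (q # qs) * (t\<^sup>2 / 16)))"
    unfolding qvar_Cons by (simp add: exp_add[symmetric] distrib_right add_divide_distrib)
  finally show ?case .
qed

lemma chi_taylor:
  assumes qs: "\<And>q. q \<in> set qs \<Longrightarrow> 0 \<le> q \<and> q \<le> 1" and t: "\<bar>t\<bar> \<le> 1"
  shows "cmod (iexp (- sum_list qs * t) * chi qs t - complex_of_real (exp (- (qvar qs * (t\<^sup>2 / 2))))) \<le> qvar qs * \<bar>t\<bar>^3"
proof -
  define f where "f = (\<lambda>q. iexp (- q * t) * (1 - complex_of_real q + complex_of_real q * iexp t))"
  define g where "g = (\<lambda>q. complex_of_real (exp (- (q*(1-q) * (t\<^sup>2 / 2)))))"
  have e1: "iexp (- sum_list qs * t) * chi qs t = prod_list (map f qs)"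
  proof (induction qs)
    case Nil then show ?case by (simp add: chi_def)
  next
    case (Cons q qs)
    have "iexp (- sum_list (q # qs) * t) = iexp (- q * t) * iexp (- sum_list qs * t)"
      by (simp add: exp_add[symmetric] algebra_simps)
    moreover have "chi (q # qs) t = (1 - complex_of_real q + complex_of_real q * iexp t) * chi qs t"
      by (simp add: chi_def)
    ultimately have "iexp (- sum_list (q # qs) * t) * chi (q # qs) t = f q * (iexp (- sum_list qs * t) * chi qs t)"
      unfolding f_def by (simp add: mult_ac)
    then show ?case using Cons by simp
  qed
  have e2: "complex_of_real (exp (- (qvar qs * (t\<^sup>2 / 2)))) = prod_list (map g qs)"
  proof (induction qs)
    case Nil then show ?case by (simp add: qvar_def)
  next
    case (Cons q qs)
    have "exp (- (qvar (q # qs) * (t\<^sup>2 / 2))) = exp (- (q*(1-q) * (t\<^sup>2 / 2))) * exp (- (qvar qs * (t\<^sup>2 / 2)))"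
      unfolding qvar_Cons by (simp add: exp_add[symmetric] distrib_right add_divide_distrib)
    then show ?case using Cons unfolding g_def by simp
  qed
  have nf: "cmod (f q) \<le> 1" if "q \<in> set qs" for q
  proof -
    have q: "0 \<le> q" "q \<le> 1" using qs that by auto
    have "cmod (f q) = cmod (complex_of_real (1 - q) + complex_of_real q * iexp t)"
      unfolding f_def by (simp add: norm_mult)
    also have "\<dots> \<le> cmod (complex_of_real (1 - q)) + cmod (complex_of_real q * iexp t)"
      by (rule norm_triangle_ineq)
    also have "cmod (complex_of_real (1 - q)) = 1 - q" using q by (simp only: norm_of_real abs_of_nonneg)
    also have "cmod (complex_of_real q * iexp t) = q" using q by (simp add: norm_mult)
    finally show ?thesis by simp
  qed
  have ng: "cmod (g q) \<le> 1" if "q \<in> set qs" for q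
    using qs[OF that] q_var_le[of q] unfolding g_def by (simp add: zero_le_mult_iff)
  have "cmod (prod_list (map f qs) - prod_list (map g qs)) \<le> sum_list (map (\<lambda>q. cmod (f q - g q)) qs)"
    by (rule norm_prod_list_diff) (use nf ng in auto)
  also have "\<dots> \<le> sum_list (map (\<lambda>q. q*(1-q) * \<bar>t\<bar>^3) qs)"
  proof (rule sum_list_mono)
    fix q assume "q \<in> set qs"
    then have q: "0 \<le> q" "q \<le> 1" using qs by auto
    show "cmod (f q - g q) \<le> q*(1-q) * \<bar>t\<bar>^3"
      using bern_factor_taylor[OF q t] unfolding f_def g_def by (simp add: algebra_simps)
  qed
  also have "\<dots> = qvar qs * \<bar>t\<bar>^3"
    unfolding qvar_def by (induction qs) (simp_all add: algebra_simps)
  finally show ?thesis unfolding e1 e2 .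
qed

lemma integral_iexp_sym:
  fixes a c :: real assumes a: "0 \<le> a"
  shows "(CLBINT s:{-a..a}. iexp (c * s)) = (if c = 0 then complex_of_real (2*a) else complex_of_real (2 * sin (c*a) / c))"
proof (cases "c = 0")
  case True
  have "(CLBINT s:{-a..a}. iexp (c * s)) = (CLBINT s:{-a..a}. 1)" using True by simp
  also have "\<dots> = complex_of_real (measure lborel {-a..a})"
    by (simp add: set_integral_const scaleR_conv_of_real)
  also have "\<dots> = complex_of_real (2*a)" using a by simp
  finally show ?thesis using True by simp
next
  case False
  have "(CLBINT s:{-a..a}. iexp (c * s)) = (CLBINT s=-a..a. iexp (c * s))"
    using a by (simp add: interval_integral_Icc)
  also have "\<dots> = (- \<i> / complex_of_real c) * iexp (c * a) - (- \<i> / complex_of_real c) * iexp (c * (-a))"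
    by (rule interval_integral_FTC_finite[where F = "\<lambda>s. (- \<i> / complex_of_real c) * iexp (c * s)"])
       (use False in \<open>auto intro!: derivative_eq_intros continuous_intros simp: has_vector_derivative_complex_iff Re_exp Im_exp\<close>)
  also have "\<dots> = complex_of_real (2 * sin (c*a) / c)"
    using False by (simp add: complex_eq_iff Re_exp Im_exp field_simps)
  finally show ?thesis using False by simp
qed

lemma set_integral_sum_fin:
  fixes f :: "'i \<Rightarrow> real \<Rightarrow> complex"
  assumes "\<And>i. i \<in> I \<Longrightarrow> set_integrable lborel A (f i)"
  shows "(CLBINT x:A. (\<Sum>i\<in>I. f i x)) = (\<Sum>i\<in>I. (CLBINT x:A. f i x))"
  using assms unfolding set_lebesgue_integral_def set_integrable_def
  by (simp add: scaleR_sum_right integral_sum)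

definition psi_fun :: "nat \<Rightarrow> (int \<Rightarrow> real) \<Rightarrow> real \<Rightarrow> real \<Rightarrow> real \<Rightarrow> complex" where
  "psi_fun M p \<mu> \<sigma> s = (\<Sum>j\<le>M. complex_of_real (p (int j)) * iexp ((real j - \<mu>) / \<sigma> * s))"

lemma continuous_psi_fun: "continuous_on A (psi_fun M p \<mu> \<sigma>)"
  unfolding psi_fun_def by (intro continuous_intros)

lemma fourier_inversion:
  fixes M :: nat and p :: "int \<Rightarrow> real" and \<mu> \<sigma> :: real and k :: int
  assumes \<sigma>: "0 < \<sigma>" and pz: "\<And>k. k < 0 \<or> k > int M \<Longrightarrow> p k = 0"
  shows "(CLBINT s:{-(pi*\<sigma>)..pi*\<sigma>}. psi_fun M p \<mu> \<sigma> s * iexp (- ((real_of_int k - \<mu>) / \<sigma>) * s))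
         = complex_of_real (2 * pi * \<sigma> * p k)"
proof -
  have a0: "0 \<le> pi * \<sigma>" using \<sigma> by simp
  have e: "psi_fun M p \<mu> \<sigma> s * iexp (- ((real_of_int k - \<mu>) / \<sigma>) * s)
     = (\<Sum>j\<le>M. complex_of_real (p (int j)) * iexp (((real j - real_of_int k) / \<sigma>) * s))" for s
  proof -
    have "iexp ((real j - \<mu>) / \<sigma> * s) * iexp (- ((real_of_int k - \<mu>) / \<sigma>) * s)
          = iexp (((real j - real_of_int k) / \<sigma>) * s)" for j
    proof -
      have "(real j - \<mu>) / \<sigma> * s + (- ((real_of_int k - \<mu>) / \<sigma>) * s) = ((real j - real_of_int k) / \<sigma>) * s"
        using \<sigma> by (simp add: field_simps)
      then show ?thesis by (simp add: exp_add[symmetric] algebra_simps)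
    qed
    then show ?thesis unfolding psi_fun_def by (simp add: sum_distrib_right mult.assoc)
  qed
  have "(CLBINT s:{-(pi*\<sigma>)..pi*\<sigma>}. psi_fun M p \<mu> \<sigma> s * iexp (- ((real_of_int k - \<mu>) / \<sigma>) * s))
     = (CLBINT s:{-(pi*\<sigma>)..pi*\<sigma>}. (\<Sum>j\<le>M. complex_of_real (p (int j)) * iexp (((real j - real_of_int k) / \<sigma>) * s)))"
    unfolding e ..
  also have "\<dots> = (\<Sum>j\<le>M. (CLBINT s:{-(pi*\<sigma>)..pi*\<sigma>}. complex_of_real (p (int j)) * iexp (((real j - real_of_int k) / \<sigma>) * s)))"
    by (rule set_integral_sum_fin) (use \<sigma> in \<open>auto intro!: borel_integrable_atLeastAtMost' continuous_intros\<close>)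
  also have "\<dots> = (\<Sum>j\<le>M. complex_of_real (p (int j)) * (if int j = k then complex_of_real (2 * (pi*\<sigma>)) else 0))"
  proof (rule sum.cong[OF refl])
    fix j assume "j \<in> {..M}"
    have "(CLBINT s:{-(pi*\<sigma>)..pi*\<sigma>}. iexp (((real j - real_of_int k) / \<sigma>) * s))
        = (if int j = k then complex_of_real (2 * (pi*\<sigma>)) else 0)"
    proof (cases "int j = k")
      case True
      then show ?thesis using integral_iexp_sym[OF a0, of "(real j - real_of_int k) / \<sigma>"] by simp
    next
      case False
      then have ne: "(real j - real_of_int k) / \<sigma> \<noteq> 0" using \<sigma> by auto
      have arg: "(real j - real_of_int k) / \<sigma> * (pi * \<sigma>) = real_of_int (int j - k) * pi"
        using \<sigma> by (simp add: divide_simps)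
      have "sin ((real j - real_of_int k) / \<sigma> * (pi * \<sigma>)) = sin (real_of_int (int j - k) * pi)"
        by (simp only: arg)
      also have "\<dots> = 0" by (simp add: sin_times_pi_eq_0)
      finally show ?thesis using integral_iexp_sym[OF a0, of "(real j - real_of_int k) / \<sigma>"] ne False by simp
    qed
    then show "(CLBINT s:{-(pi*\<sigma>)..pi*\<sigma>}. complex_of_real (p (int j)) * iexp (((real j - real_of_int k) / \<sigma>) * s))
        = complex_of_real (p (int j)) * (if int j = k then complex_of_real (2 * (pi*\<sigma>)) else 0)"
      by (simp add: set_integral_mult_right)
  qed
  also have "\<dots> = complex_of_real (2 * pi * \<sigma> * p k)"
  proof (cases "0 \<le> k \<and> k \<le> int M")
    case True
    then obtain j0 where j0: "k = int j0" "j0 \<le> M" by (metis nonneg_int_cases of_nat_le_iff)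
    have "(\<Sum>j\<le>M. complex_of_real (p (int j)) * (if int j = k then complex_of_real (2 * (pi*\<sigma>)) else 0))
        = (\<Sum>j\<in>{j0}. complex_of_real (p (int j)) * complex_of_real (2 * (pi*\<sigma>)))"
      using j0 by (intro sum.mono_neutral_cong_right) auto
    then show ?thesis using j0 by (simp add: algebra_simps)
  next
    case False
    then have "p k = 0" using pz by auto
    moreover have "(\<Sum>j\<le>M. complex_of_real (p (int j)) * (if int j = k then complex_of_real (2 * (pi*\<sigma>)) else 0)) = 0"
      using False by (intro sum.neutral) auto
    ultimately show ?thesis by simp
  qed
  finally show ?thesis .
qed

lemma integrable_gauss:
  fixes c :: real assumes c: "0 < c"
  shows "integrable lborel (\<lambda>s. exp (- (c * s\<^sup>2)))"
proof -
  define \<sigma> where "\<sigma> = sqrt (1 / (2 * c))"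
  have \<sigma>: "0 < \<sigma>" using c unfolding \<sigma>_def by simp
  have s2: "\<sigma>\<^sup>2 = 1 / (2*c)" using c unfolding \<sigma>_def by simp
  have "integrable lborel (\<lambda>s. sqrt (2 * pi * \<sigma>\<^sup>2) * normal_density 0 \<sigma> s)"
    using integrable_normal_density[OF \<sigma>, of 0] by (rule integrable_mult_right)
  moreover have "sqrt (2 * pi * \<sigma>\<^sup>2) * normal_density 0 \<sigma> s = exp (- (c * s\<^sup>2))" for s
    using c \<sigma> unfolding normal_density_def s2 by (simp add: field_simps)
  ultimately show ?thesis by simp
qed

lemma gauss_fourier:
  "(CLINT s|lborel. complex_of_real (exp (- s\<^sup>2/2)) * iexp (- x * s)) = complex_of_real (sqrt (2*pi) * exp (- x\<^sup>2/2))"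
proof -
  have "char std_normal_distribution (-x) = complex_of_real (exp (- x\<^sup>2/2))"
    by (simp add: char_std_normal_distribution)
  then have "(CLINT s|lborel. std_normal_density s *\<^sub>R iexp (- x * s)) = complex_of_real (exp (- x\<^sup>2/2))"
    unfolding char_def by (subst (asm) integral_density) (auto simp: normal_density_nonneg)
  note A = this
  have "(CLINT s|lborel. complex_of_real (exp (- s\<^sup>2/2)) * iexp (- x * s))
      = (CLINT s|lborel. sqrt (2*pi) *\<^sub>R (std_normal_density s *\<^sub>R iexp (- x * s)))"
    by (rule Bochner_Integration.integral_cong) (simp_all add: std_normal_density_def scaleR_conv_of_real)
  also have "\<dots> = sqrt (2*pi) *\<^sub>R (CLINT s|lborel. std_normal_density s *\<^sub>R iexp (- x * s))"
    by (rule integral_scaleR_right)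
  also have "\<dots> = complex_of_real (sqrt (2*pi) * exp (- x\<^sup>2/2))"
    unfolding A by (simp add: scaleR_conv_of_real)
  finally show ?thesis .
qed

definition hfun :: "nat \<Rightarrow> (int \<Rightarrow> real) \<Rightarrow> real \<Rightarrow> real \<Rightarrow> real \<Rightarrow> complex" where
  "hfun M p \<mu> \<sigma> s = indicator {-(pi*\<sigma>)..pi*\<sigma>} s *\<^sub>R psi_fun M p \<mu> \<sigma> s - complex_of_real (exp (- s\<^sup>2/2))"

lemma hfun_measurable[measurable]: "hfun M p \<mu> \<sigma> \<in> borel_measurable lborel"
proof -
  have "psi_fun M p \<mu> \<sigma> \<in> borel_measurable borel"
    using continuous_psi_fun by (rule borel_measurable_continuous_onI)
  then show ?thesis unfolding hfun_def by measurable
qed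

lemma llt_single:
  fixes M :: nat and p :: "int \<Rightarrow> real" and \<mu> \<sigma> :: real and k :: int
  assumes \<sigma>: "0 < \<sigma>" and pz: "\<And>k. k < 0 \<or> k > int M \<Longrightarrow> p k = 0"
  shows "\<bar>\<sigma> * p k - exp (- ((real_of_int k - \<mu>) / \<sigma>)\<^sup>2 / 2) / sqrt (2*pi)\<bar>
         \<le> (LINT s|lborel. norm (hfun M p \<mu> \<sigma> s)) / (2*pi)"
proof -
  define x where "x = (real_of_int k - \<mu>) / \<sigma>"
  define E where "E = (\<lambda>s::real. iexp (- x * s))"
  have nE: "norm (E s) = 1" for s unfolding E_def by simp
  have I1: "(CLINT s|lborel. indicator {-(pi*\<sigma>)..pi*\<sigma>} s *\<^sub>R (psi_fun M p \<mu> \<sigma> s * E s))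
      = complex_of_real (2 * pi * \<sigma> * p k)"
    unfolding E_def x_def set_lebesgue_integral_def[symmetric] by (rule fourier_inversion[OF \<sigma> pz])
  have I2: "(CLINT s|lborel. complex_of_real (exp (- s\<^sup>2/2)) * E s) = complex_of_real (sqrt (2*pi) * exp (- x\<^sup>2/2))"
    unfolding E_def by (rule gauss_fourier)
  have int1: "integrable lborel (\<lambda>s. indicator {-(pi*\<sigma>)..pi*\<sigma>} s *\<^sub>R (psi_fun M p \<mu> \<sigma> s * E s))"
  proof -
    have "continuous_on {-(pi*\<sigma>)..pi*\<sigma>} (\<lambda>s. psi_fun M p \<mu> \<sigma> s * E s)"
      unfolding E_def by (intro continuous_on_mult continuous_psi_fun continuous_intros)
    from borel_integrable_atLeastAtMost'[OF this] show ?thesis unfolding set_integrable_def .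
  qed
  have int2: "integrable lborel (\<lambda>s. complex_of_real (exp (- s\<^sup>2/2)) * E s)"
  proof (rule Bochner_Integration.integrable_bound)
    have "(\<lambda>s::real. exp (- s\<^sup>2/2)) = (\<lambda>s. exp (- ((1/2) * s\<^sup>2)))" by (simp add: field_simps)
    moreover have "integrable lborel (\<lambda>s::real. exp (- ((1/2) * s\<^sup>2)))" by (rule integrable_gauss) simp
    ultimately show "integrable lborel (\<lambda>s::real. exp (- s\<^sup>2/2))" by (simp only:)
    show "(\<lambda>s. complex_of_real (exp (- s\<^sup>2/2)) * E s) \<in> borel_measurable lborel"
      unfolding E_def by measurable
    show "AE s in lborel. norm (complex_of_real (exp (- s\<^sup>2/2)) * E s) \<le> norm (exp (- s\<^sup>2/2))"
      by (simp add: norm_mult nE)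
  qed
  have "complex_of_real (2 * pi * \<sigma> * p k) - complex_of_real (sqrt (2*pi) * exp (- x\<^sup>2/2))
      = (CLINT s|lborel. indicator {-(pi*\<sigma>)..pi*\<sigma>} s *\<^sub>R (psi_fun M p \<mu> \<sigma> s * E s) - complex_of_real (exp (- s\<^sup>2/2)) * E s)"
    unfolding I1[symmetric] I2[symmetric] by (rule Bochner_Integration.integral_diff[symmetric, OF int1 int2])
  also have "\<dots> = (CLINT s|lborel. hfun M p \<mu> \<sigma> s * E s)"
    unfolding hfun_def by (rule Bochner_Integration.integral_cong) (simp_all add: algebra_simps)
  finally have eq: "complex_of_real (2 * pi * \<sigma> * p k - sqrt (2*pi) * exp (- x\<^sup>2/2)) = (CLINT s|lborel. hfun M p \<mu> \<sigma> s * E s)"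
    by simp
  have "\<bar>2 * pi * \<sigma> * p k - sqrt (2*pi) * exp (- x\<^sup>2/2)\<bar> = norm (CLINT s|lborel. hfun M p \<mu> \<sigma> s * E s)"
    by (simp only: eq[symmetric] norm_of_real)
  also have "\<dots> \<le> (LINT s|lborel. norm (hfun M p \<mu> \<sigma> s * E s))" by (rule integral_norm_bound)
  also have "\<dots> = (LINT s|lborel. norm (hfun M p \<mu> \<sigma> s))" by (simp add: norm_mult nE)
  finally have B: "\<bar>2 * pi * \<sigma> * p k - sqrt (2*pi) * exp (- x\<^sup>2/2)\<bar> \<le> (LINT s|lborel. norm (hfun M p \<mu> \<sigma> s))" .
  have sq: "sqrt (2*pi) / (2*pi) = 1 / sqrt (2*pi)"
    by (metis div_by_1 divide_divide_eq_right mult.commute real_div_sqrt pi_gt_zero less_eq_real_def zero_le_mult_iff zero_le_numeral)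
  have "\<bar>\<sigma> * p k - exp (- x\<^sup>2 / 2) / sqrt (2*pi)\<bar> = \<bar>2 * pi * \<sigma> * p k - sqrt (2*pi) * exp (- x\<^sup>2/2)\<bar> / (2*pi)"
  proof -
    have "\<sigma> * p k - exp (- x\<^sup>2 / 2) / sqrt (2*pi) = (2 * pi * \<sigma> * p k - sqrt (2*pi) * exp (- x\<^sup>2/2)) / (2*pi)"
      using sq by (simp add: field_simps)
    then show ?thesis by simp
  qed
  also have "\<dots> \<le> (LINT s|lborel. norm (hfun M p \<mu> \<sigma> s)) / (2*pi)"
    using B by (intro divide_right_mono) auto
  finally show ?thesis unfolding x_def by simp
qed

lemma psi_chi:
  assumes charid: "\<And>t. (\<Sum>j\<le>M. complex_of_real (p (int j)) * iexp (real j * t)) = chi qs t"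
  shows "psi_fun M p \<mu> \<sigma> s = iexp (- \<mu> * (s/\<sigma>)) * chi qs (s/\<sigma>)"
proof -
  have "psi_fun M p \<mu> \<sigma> s = (\<Sum>j\<le>M. iexp (- \<mu> * (s/\<sigma>)) * (complex_of_real (p (int j)) * iexp (real j * (s/\<sigma>))))"
    unfolding psi_fun_def
  proof (rule sum.cong[OF refl])
    fix j
    have "(real j - \<mu>) / \<sigma> * s = (real j - \<mu>) * (s / \<sigma>)" by simp
    also have "\<dots> = - \<mu> * (s/\<sigma>) + real j * (s/\<sigma>)" by (simp add: algebra_simps)
    finally have e: "(real j - \<mu>) / \<sigma> * s = - \<mu> * (s/\<sigma>) + real j * (s/\<sigma>)" .
    show "complex_of_real (p (int j)) * iexp ((real j - \<mu>) / \<sigma> * s)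
        = iexp (- \<mu> * (s/\<sigma>)) * (complex_of_real (p (int j)) * iexp (real j * (s/\<sigma>)))"
      unfolding e by (simp add: exp_add[symmetric] distrib_left algebra_simps)
  qed
  also have "\<dots> = iexp (- \<mu> * (s/\<sigma>)) * chi qs (s/\<sigma>)"
    by (simp only: sum_distrib_left[symmetric] charid)
  finally show ?thesis .
qed

lemma D_tendsto:
  fixes M :: "nat \<Rightarrow> nat" and p :: "nat \<Rightarrow> int \<Rightarrow> real" and qs :: "nat \<Rightarrow> real list"
  assumes qs01: "\<And>n q. q \<in> set (qs n) \<Longrightarrow> 0 \<le> q \<and> q \<le> 1"
    and charid: "\<And>n t. (\<Sum>j\<le>M n. complex_of_real (p n (int j)) * iexp (real j * t)) = chi (qs n) t"
    and var_inf: "filterlim (\<lambda>n. qvar (qs n)) at_top sequentially"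
  shows "(\<lambda>n. LINT s|lborel. norm (hfun (M n) (p n) (sum_list (qs n)) (sqrt (qvar (qs n))) s)) \<longlonglongrightarrow> 0"
proof -
  define \<mu> where "\<mu> n = sum_list (qs n)" for n
  define \<sigma> where "\<sigma> n = sqrt (qvar (qs n))" for n
  have qv0: "0 \<le> qvar (qs n)" for n using qvar_nonneg[of "qs n"] qs01 by blast
  have \<sigma>0: "0 \<le> \<sigma> n" for n unfolding \<sigma>_def using qv0 by simp
  have \<sigma>sq: "(\<sigma> n)\<^sup>2 = qvar (qs n)" for n unfolding \<sigma>_def using qv0 by simp
  have \<sigma>inf: "filterlim \<sigma> at_top sequentially" unfolding \<sigma>_def
    by (rule filterlim_compose[OF sqrt_at_top var_inf])
  have key: "qvar (qs n) * (s / \<sigma> n)\<^sup>2 = s\<^sup>2" if "0 < \<sigma> n \<or> s = 0" for n s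
    using that
  proof
    assume "0 < \<sigma> n" then show ?thesis unfolding \<sigma>sq[symmetric] by (simp add: field_simps)
  qed simp
  define w where "w s = exp (- ((1/16) * s\<^sup>2)) + exp (- ((1/2) * s\<^sup>2))" for s :: real
  have "(\<lambda>n. LINT s|lborel. norm (hfun (M n) (p n) (\<mu> n) (\<sigma> n) s)) \<longlonglongrightarrow> integral\<^sup>L lborel (\<lambda>s::real. 0::real)"
  proof (rule integral_dominated_convergence[of "\<lambda>s. 0::real" lborel "\<lambda>n s. norm (hfun (M n) (p n) (\<mu> n) (\<sigma> n) s)" w])
    show "(\<lambda>s. 0::real) \<in> borel_measurable lborel" by simp
    show "(\<lambda>s. norm (hfun (M n) (p n) (\<mu> n) (\<sigma> n) s)) \<in> borel_measurable lborel" for n by measurable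
    show "integrable lborel w" unfolding w_def
      by (intro Bochner_Integration.integrable_add integrable_gauss) auto
    show "AE s in lborel. (\<lambda>n. norm (hfun (M n) (p n) (\<mu> n) (\<sigma> n) s)) \<longlonglongrightarrow> 0"
    proof (rule AE_I2)
      fix s :: real
      have ev: "eventually (\<lambda>n. max 1 \<bar>s\<bar> \<le> \<sigma> n) sequentially"
        using \<sigma>inf unfolding filterlim_at_top by blast
      show "(\<lambda>n. norm (hfun (M n) (p n) (\<mu> n) (\<sigma> n) s)) \<longlonglongrightarrow> 0"
      proof (rule Lim_null_comparison)
        show "eventually (\<lambda>n. norm (norm (hfun (M n) (p n) (\<mu> n) (\<sigma> n) s)) \<le> \<bar>s\<bar>^3 / \<sigma> n) sequentially"
          using ev
        proof eventually_elim
          case (elim n)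
          then have sp: "0 < \<sigma> n" "1 \<le> \<sigma> n" "\<bar>s\<bar> \<le> \<sigma> n" by auto
          have t1: "\<bar>s / \<sigma> n\<bar> \<le> 1" using sp by (simp add: abs_div)
          have h: "\<sigma> n \<le> pi * \<sigma> n" using sp pi_ge_two by simp
          have "-(pi*\<sigma> n) \<le> s" "s \<le> pi*\<sigma> n"
            using h abs_le_D1[OF sp(3)] abs_le_D2[OF sp(3)] by linarith+
          then have ind: "s \<in> {-(pi*\<sigma> n)..pi*\<sigma> n}" by auto
          have "hfun (M n) (p n) (\<mu> n) (\<sigma> n) s
              = iexp (- sum_list (qs n) * (s / \<sigma> n)) * chi (qs n) (s / \<sigma> n)
                - complex_of_real (exp (- (qvar (qs n) * ((s / \<sigma> n)\<^sup>2 / 2))))"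
          proof -
            have "qvar (qs n) * ((s / \<sigma> n)\<^sup>2 / 2) = s\<^sup>2/2" using key[of n s] sp by simp
            then show ?thesis unfolding hfun_def using ind psi_chi[OF charid] by (simp add: \<mu>_def)
          qed
          then have "norm (hfun (M n) (p n) (\<mu> n) (\<sigma> n) s) \<le> qvar (qs n) * \<bar>s / \<sigma> n\<bar>^3"
            using chi_taylor[OF qs01 t1] by simp
          also have "\<dots> = \<bar>s\<bar>^3 / \<sigma> n"
            unfolding \<sigma>sq[symmetric] using sp by (simp add: abs_div power_divide power2_eq_square power3_eq_cube)
          finally show ?case by simp
        qed
        show "(\<lambda>n. \<bar>s\<bar>^3 / \<sigma> n) \<longlonglongrightarrow> 0"
          by (rule tendsto_divide_0[OF tendsto_const filterlim_at_top_imp_at_infinity[OF \<sigma>inf]])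
      qed
    qed
    show "AE s in lborel. norm (norm (hfun (M n) (p n) (\<mu> n) (\<sigma> n) s)) \<le> w s" for n
    proof (rule AE_I2)
      fix s :: real
      have "norm (hfun (M n) (p n) (\<mu> n) (\<sigma> n) s)
          \<le> norm (indicator {-(pi*\<sigma> n)..pi*\<sigma> n} s *\<^sub>R psi_fun (M n) (p n) (\<mu> n) (\<sigma> n) s)
            + norm (complex_of_real (exp (- s\<^sup>2/2)))"
        unfolding hfun_def by (rule norm_triangle_ineq4)
      also have "norm (complex_of_real (exp (- s\<^sup>2/2))) = exp (- ((1/2) * s\<^sup>2))" by simp
      also have "norm (indicator {-(pi*\<sigma> n)..pi*\<sigma> n} s *\<^sub>R psi_fun (M n) (p n) (\<mu> n) (\<sigma> n) s)
               \<le> exp (- ((1/16) * s\<^sup>2))"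
      proof (cases "s \<in> {-(pi*\<sigma> n)..pi*\<sigma> n}")
        case True
        have cs: "0 < \<sigma> n \<or> s = 0" using True \<sigma>0[of n] by (cases "\<sigma> n = 0") auto
        have tpi: "\<bar>s / \<sigma> n\<bar> \<le> pi"
        proof (cases "\<sigma> n = 0")
          case False
          then have "0 < \<sigma> n" using \<sigma>0[of n] by simp
          then show ?thesis using True by (simp add: abs_div divide_le_eq abs_le_iff mult.commute)
        qed simp
        have "norm (indicator {-(pi*\<sigma> n)..pi*\<sigma> n} s *\<^sub>R psi_fun (M n) (p n) (\<mu> n) (\<sigma> n) s)
            = norm (chi (qs n) (s / \<sigma> n))"
          using True psi_chi[OF charid] by (simp add: norm_mult)
        also have "\<dots> \<le> exp (- (qvar (qs n) * ((s / \<sigma> n)\<^sup>2 / 16)))"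
          by (rule chi_bound[OF qs01 tpi])
        also have "qvar (qs n) * ((s / \<sigma> n)\<^sup>2 / 16) = (1/16) * s\<^sup>2" using key[OF cs] by simp
        finally show ?thesis .
      qed simp
      finally show "norm (norm (hfun (M n) (p n) (\<mu> n) (\<sigma> n) s)) \<le> w s" unfolding w_def by simp
    qed
  qed
  then show ?thesis unfolding \<mu>_def \<sigma>_def by simp
qed

lemma gauss_lip: "\<bar>exp (- (a::real)\<^sup>2/2) - exp (- b\<^sup>2/2)\<bar> \<le> \<bar>a - b\<bar>"
proof -
  have bnd: "\<bar>- u * exp (- u\<^sup>2/2)\<bar> \<le> 1" for u :: real
  proof -
    have "\<bar>u\<bar> \<le> 1 + u\<^sup>2/2"
    proof -
      have "0 \<le> (\<bar>u\<bar> - 1)\<^sup>2" by simp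
      then show ?thesis by (simp add: power2_eq_square algebra_simps)
    qed
    also have "\<dots> \<le> exp (u\<^sup>2/2)" by (rule exp_ge_add_one_self)
    finally have "\<bar>u\<bar> * exp (- u\<^sup>2/2) \<le> exp (u\<^sup>2/2) * exp (- u\<^sup>2/2)"
      by (intro mult_right_mono) auto
    also have "\<dots> = 1" by (simp add: exp_add[symmetric])
    finally show ?thesis by (simp add: abs_mult)
  qed
  have d: "((\<lambda>u. exp (- u\<^sup>2/2)) has_real_derivative (- u * exp (- u\<^sup>2/2))) (at u)" for u :: real
    by (auto intro!: derivative_eq_intros simp: power2_eq_square)
  show ?thesis
  proof (cases a b rule: linorder_cases)
    case less
    from MVT2[OF less, of "\<lambda>u. exp (- u\<^sup>2/2)" "\<lambda>u. - u * exp (- u\<^sup>2/2)"] d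
    obtain z where "exp (- b\<^sup>2/2) - exp (- a\<^sup>2/2) = (b - a) * (- z * exp (- z\<^sup>2/2))" by blast
    then have "\<bar>exp (- a\<^sup>2/2) - exp (- b\<^sup>2/2)\<bar> = \<bar>b - a\<bar> * \<bar>- z * exp (- z\<^sup>2/2)\<bar>"
      by (metis abs_minus_commute abs_mult)
    also have "\<dots> \<le> \<bar>b - a\<bar> * 1" by (intro mult_left_mono bnd) auto
    finally show ?thesis by (simp add: abs_minus_commute)
  next
    case greater
    from MVT2[OF greater, of "\<lambda>u. exp (- u\<^sup>2/2)" "\<lambda>u. - u * exp (- u\<^sup>2/2)"] d
    obtain z where "exp (- a\<^sup>2/2) - exp (- b\<^sup>2/2) = (a - b) * (- z * exp (- z\<^sup>2/2))" by blast
    then have "\<bar>exp (- a\<^sup>2/2) - exp (- b\<^sup>2/2)\<bar> = \<bar>a - b\<bar> * \<bar>- z * exp (- z\<^sup>2/2)\<bar>"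
      by (simp add: abs_mult)
    also have "\<dots> \<le> \<bar>a - b\<bar> * 1" by (intro mult_left_mono bnd) auto
    finally show ?thesis by simp
  qed simp
qed

lemma sup_tendsto_0:
  fixes F :: "nat \<Rightarrow> real \<Rightarrow> real"
  assumes nn: "\<And>n x. 0 \<le> F n x" and ev: "eventually (\<lambda>n. \<forall>x. F n x \<le> B n) sequentially"
    and B: "B \<longlonglongrightarrow> 0"
  shows "(\<lambda>n. SUP x. F n x) \<longlonglongrightarrow> 0"
proof (rule Lim_null_comparison[OF _ B])
  show "eventually (\<lambda>n. norm (SUP x. F n x) \<le> B n) sequentially"
    using ev
  proof eventually_elim
    case (elim n)
    have bdd: "bdd_above (range (F n))" using elim by (auto intro: bdd_aboveI2)
    have "0 \<le> F n 0" by (rule nn)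
    also have "\<dots> \<le> (SUP x. F n x)" by (rule cSUP_upper[OF _ bdd]) simp
    finally have "0 \<le> (SUP x. F n x)" .
    moreover have "(SUP x. F n x) \<le> B n" using elim by (intro cSUP_least) auto
    ultimately show ?case by simp
  qed
qed

lemma sqrt_2pi_ge1: "1 \<le> sqrt (2 * pi)"
  using pi_ge_two by simp

theorem llt_seq:
  fixes M :: "nat \<Rightarrow> nat" and p :: "nat \<Rightarrow> int \<Rightarrow> real" and qs :: "nat \<Rightarrow> real list"
  assumes pz: "\<And>n k. k < 0 \<or> k > int (M n) \<Longrightarrow> p n k = 0"
    and qs01: "\<And>n q. q \<in> set (qs n) \<Longrightarrow> 0 \<le> q \<and> q \<le> 1"
    and charid: "\<And>n t. (\<Sum>j\<le>M n. complex_of_real (p n (int j)) * iexp (real j * t)) = chi (qs n) t"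
    and var_inf: "filterlim (\<lambda>n. qvar (qs n)) at_top sequentially"
  shows "(\<lambda>n. SUP x::real. \<bar>sqrt (qvar (qs n)) * p n \<lfloor>sum_list (qs n) + x * sqrt (qvar (qs n))\<rfloor>
                 - (1 / sqrt (2 * pi)) * exp (- x\<^sup>2 / 2)\<bar>) \<longlonglongrightarrow> 0"
proof -
  define \<mu> where "\<mu> n = sum_list (qs n)" for n
  define \<sigma> where "\<sigma> n = sqrt (qvar (qs n))" for n
  define D where "D n = (LINT s|lborel. norm (hfun (M n) (p n) (\<mu> n) (\<sigma> n) s))" for n
  have Dt: "D \<longlonglongrightarrow> 0" unfolding D_def \<mu>_def \<sigma>_def by (rule D_tendsto[OF qs01 charid var_inf])
  have \<sigma>inf: "filterlim \<sigma> at_top sequentially" unfolding \<sigma>_def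
    by (rule filterlim_compose[OF sqrt_at_top var_inf])
  have inv: "(\<lambda>n. 1 / \<sigma> n) \<longlonglongrightarrow> 0"
    by (rule tendsto_divide_0[OF tendsto_const filterlim_at_top_imp_at_infinity[OF \<sigma>inf]])
  have B: "(\<lambda>n. D n / (2*pi) + 1 / \<sigma> n) \<longlonglongrightarrow> 0"
    using tendsto_add[OF tendsto_divide[OF Dt tendsto_const] inv] by simp
  have evpos: "eventually (\<lambda>n. 1 \<le> \<sigma> n) sequentially" using \<sigma>inf unfolding filterlim_at_top by blast
  have "(\<lambda>n. SUP x::real. \<bar>\<sigma> n * p n \<lfloor>\<mu> n + x * \<sigma> n\<rfloor> - (1 / sqrt (2 * pi)) * exp (- x\<^sup>2 / 2)\<bar>) \<longlonglongrightarrow> 0"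
  proof (rule sup_tendsto_0[OF _ _ B])
    show "eventually (\<lambda>n. \<forall>x. \<bar>\<sigma> n * p n \<lfloor>\<mu> n + x * \<sigma> n\<rfloor> - (1 / sqrt (2 * pi)) * exp (- x\<^sup>2 / 2)\<bar>
                           \<le> D n / (2*pi) + 1 / \<sigma> n) sequentially"
      using evpos
    proof eventually_elim
      case (elim n)
      then have sp: "0 < \<sigma> n" by simp
      show ?case
      proof
        fix x :: real
        define k where "k = \<lfloor>\<mu> n + x * \<sigma> n\<rfloor>"
        define xk where "xk = (real_of_int k - \<mu> n) / \<sigma> n"
        have k1: "real_of_int k \<le> \<mu> n + x * \<sigma> n" "\<mu> n + x * \<sigma> n < real_of_int k + 1"
          unfolding k_def by linarith+
        have "xk \<le> x" using k1 sp unfolding xk_def by (simp add: divide_le_eq)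
        moreover have "x - 1 / \<sigma> n < xk"
        proof -
          have "x - 1 / \<sigma> n = (x * \<sigma> n - 1) / \<sigma> n" using sp by (simp add: field_simps)
          also have "\<dots> < (real_of_int k - \<mu> n) / \<sigma> n"
            by (rule divide_strict_right_mono) (use k1 sp in linarith)+
          finally show ?thesis unfolding xk_def .
        qed
        ultimately have dx: "\<bar>xk - x\<bar> \<le> 1 / \<sigma> n" by simp
        have L: "\<bar>\<sigma> n * p n k - exp (- xk\<^sup>2 / 2) / sqrt (2*pi)\<bar> \<le> D n / (2*pi)"
          unfolding xk_def D_def by (rule llt_single[OF sp pz])
        have "\<bar>exp (- xk\<^sup>2 / 2) / sqrt (2*pi) - (1 / sqrt (2 * pi)) * exp (- x\<^sup>2 / 2)\<bar>
            = \<bar>exp (- xk\<^sup>2 / 2) - exp (- x\<^sup>2 / 2)\<bar> / sqrt (2*pi)"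
          by (simp add: diff_divide_distrib[symmetric])
        also have "\<dots> \<le> \<bar>exp (- xk\<^sup>2 / 2) - exp (- x\<^sup>2 / 2)\<bar>"
          using sqrt_2pi_ge1 by (simp add: divide_le_eq mult_le_cancel_left1)
        also have "\<dots> \<le> \<bar>xk - x\<bar>" by (rule gauss_lip)
        also have "\<dots> \<le> 1 / \<sigma> n" by (rule dx)
        finally have R: "\<bar>exp (- xk\<^sup>2 / 2) / sqrt (2*pi) - (1 / sqrt (2 * pi)) * exp (- x\<^sup>2 / 2)\<bar> \<le> 1 / \<sigma> n" .
        show "\<bar>\<sigma> n * p n \<lfloor>\<mu> n + x * \<sigma> n\<rfloor> - (1 / sqrt (2 * pi)) * exp (- x\<^sup>2 / 2)\<bar> \<le> D n / (2*pi) + 1 / \<sigma> n"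
          using L R unfolding k_def[symmetric] by linarith
      qed
    qed
  qed simp
  then show ?thesis unfolding \<mu>_def \<sigma>_def .
qed

lemma polya_uniform:
  fixes F :: "nat \<Rightarrow> real \<Rightarrow> real" and G :: "real \<Rightarrow> real"
  assumes Fmono: "\<And>n x y. x \<le> y \<Longrightarrow> F n x \<le> F n y"
    and F01: "\<And>n x. 0 \<le> F n x \<and> F n x \<le> 1"
    and Gcont: "\<And>x. isCont G x" and Gmono: "\<And>x y. x \<le> y \<Longrightarrow> G x \<le> G y"
    and G01: "\<And>x. 0 \<le> G x \<and> G x \<le> 1"
    and Gbot: "(G \<longlongrightarrow> 0) at_bot" and Gtop: "(G \<longlongrightarrow> 1) at_top"
    and conv: "\<And>x. (\<lambda>n. F n x) \<longlonglongrightarrow> G x"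
    and e: "0 < e"
  shows "eventually (\<lambda>n. \<forall>x. \<bar>F n x - G x\<bar> \<le> e) sequentially"
proof -
  define \<epsilon> where "\<epsilon> = e / 2"
  have \<epsilon>: "0 < \<epsilon>" using e unfolding \<epsilon>_def by simp
  from Gbot \<epsilon> have "eventually (\<lambda>x. dist (G x) 0 < \<epsilon>) at_bot" by (rule tendstoD)
  then obtain L where L: "\<And>x. x \<le> L \<Longrightarrow> G x < \<epsilon>"
    unfolding eventually_at_bot_linorder using G01 by (auto simp: dist_real_def)
  from Gtop \<epsilon> have "eventually (\<lambda>x. dist (G x) 1 < \<epsilon>) at_top" by (rule tendstoD)
  then obtain U0 where U0: "\<And>x. x \<ge> U0 \<Longrightarrow> 1 - \<epsilon> < G x"
    unfolding eventually_at_top_linorder using G01 by (force simp: dist_real_def)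
  define U where "U = max U0 L"
  have LU: "L \<le> U" unfolding U_def by simp
  have U: "\<And>x. x \<ge> U \<Longrightarrow> 1 - \<epsilon> < G x" using U0 unfolding U_def by auto
  have "uniformly_continuous_on {L..U} G"
    by (intro compact_uniformly_continuous continuous_at_imp_continuous_on) (auto simp: Gcont)
  then obtain d where d: "0 < d" and dG: "\<And>x y. x \<in> {L..U} \<Longrightarrow> y \<in> {L..U} \<Longrightarrow> \<bar>y - x\<bar> < d \<Longrightarrow> \<bar>G y - G x\<bar> < \<epsilon>"
    unfolding uniformly_continuous_on_def dist_real_def using \<epsilon> by metis
  define h where "h = d / 2"
  have h: "0 < h" "h < d" using d unfolding h_def by auto
  define m where "m = nat \<lceil>(U - L) / h\<rceil>"
  define t where "t i = min U (L + real i * h)" for i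
  define T where "T = t ` {..m+1}"
  have tLU: "t i \<in> {L..U}" for i unfolding t_def using LU h by auto
  have "finite T" unfolding T_def by simp
  moreover have "\<forall>y\<in>T. eventually (\<lambda>n. \<bar>F n y - G y\<bar> < \<epsilon>) sequentially"
  proof
    fix y assume "y \<in> T"
    from conv[of y] \<epsilon> have "eventually (\<lambda>n. dist (F n y) (G y) < \<epsilon>) sequentially" by (rule tendstoD)
    then show "eventually (\<lambda>n. \<bar>F n y - G y\<bar> < \<epsilon>) sequentially" by (simp add: dist_real_def)
  qed
  ultimately have ev: "eventually (\<lambda>n. \<forall>y\<in>T. \<bar>F n y - G y\<bar> < \<epsilon>) sequentially"
    by (rule eventually_ball_finite)
  show ?thesis
    using ev
  proof eventually_elim
    case (elim n)
    have LT: "L \<in> T" unfolding T_def t_def using LU by (auto intro!: image_eqI[of _ _ 0])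
    have UT: "U \<in> T"
    proof -
      have "(U - L) / h \<le> real m" unfolding m_def by linarith
      then have "U - L \<le> real m * h" using h by (simp add: divide_le_eq)
      then have "t m = U" unfolding t_def by simp
      then show ?thesis unfolding T_def by force
    qed
    show ?case
    proof
      fix x
      show "\<bar>F n x - G x\<bar> \<le> e"
      proof (cases "x < L")
        case True
        have "F n x \<le> F n L" using True by (intro Fmono) simp
        also have "\<dots> < G L + \<epsilon>" using elim LT by auto
        also have "G L < \<epsilon>" using L by simp
        finally have "F n x < 2 * \<epsilon>" by simp
        moreover have "G x < \<epsilon>" using L True by simp
        ultimately show ?thesis using F01[of n x] G01[of x] unfolding \<epsilon>_def by auto
      next
        case False
        show ?thesis
        proof (cases "x > U")
          case True
          have "F n U \<le> F n x" using True by (intro Fmono) simp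
          moreover have "G U - \<epsilon> < F n U" using elim UT by auto
          moreover have "1 - \<epsilon> < G U" using U by simp
          ultimately have "1 - 2 * \<epsilon> < F n x" by simp
          moreover have "1 - \<epsilon> < G x" using U True by simp
          ultimately show ?thesis using F01[of n x] G01[of x] unfolding \<epsilon>_def by auto
        next
          case False
          with \<open>\<not> x < L\<close> have x: "L \<le> x" "x \<le> U" by auto
          define i where "i = nat \<lfloor>(x - L) / h\<rfloor>"
          have y0: "0 \<le> (x - L) / h" using x h by simp
          have ri: "real i = real_of_int \<lfloor>(x - L) / h\<rfloor>" unfolding i_def using y0 by simp
          have i1: "real i * h \<le> x - L"
          proof -
            have "real i \<le> (x - L) / h" unfolding ri by linarith
            then show ?thesis using h by (simp add: le_divide_eq)
          qed
          have i2: "x - L < (real i + 1) * h"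
          proof -
            have "(x - L) / h < real i + 1" unfolding ri by linarith
            then show ?thesis using h by (simp add: divide_less_eq)
          qed
          have i_le: "i \<le> m"
          proof -
            have "(x - L) / h \<le> (U - L) / h" using x h by (simp add: divide_right_mono)
            then show ?thesis unfolding i_def m_def by (intro nat_mono floor_le_ceiling[THEN order_trans]) 
                (meson ceiling_mono floor_le_ceiling order_trans)
          qed
          have ti: "t i = L + real i * h" unfolding t_def using i1 x by simp
          have ti_x: "t i \<le> x" using ti i1 by simp
          have x_ti1: "x \<le> t (i+1)" unfolding t_def using i2 x by (simp add: algebra_simps)
          have "t (i+1) \<le> L + real (i+1) * h" unfolding t_def by simp
          then have ti1_x: "t (i+1) - x < d" using i1 h by (simp add: algebra_simps)
          have x_ti: "x - t i < d" using ti i2 h by (simp add: algebra_simps)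
          have T1: "t i \<in> T" "t (i+1) \<in> T" unfolding T_def using i_le by auto
          have "F n x \<le> F n (t (i+1))" using x_ti1 by (rule Fmono)
          also have "\<dots> < G (t (i+1)) + \<epsilon>" using elim T1 by auto
          also have "G (t (i+1)) < G x + \<epsilon>" using dG[of x "t (i+1)"] tLU[of "i+1"] x x_ti1 ti1_x by auto
          finally have up: "F n x < G x + 2 * \<epsilon>" by simp
          have "G x - \<epsilon> < G (t i)" using dG[of "t i" x] tLU[of i] x ti_x x_ti by auto
          also have "G (t i) - \<epsilon> < F n (t i)" using elim T1 by auto
          then have "G (t i) < F n (t i) + \<epsilon>" by simp
          also have "F n (t i) \<le> F n x" using ti_x by (rule Fmono)
          finally have lo: "G x - 2 * \<epsilon> < F n x" by simp
          show ?thesis using up lo unfolding \<epsilon>_def by auto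
        qed
      qed
    qed
  qed
qed

lemma std_normal_cdf_eq:
  "cdf std_normal_distribution x = (1 / sqrt (2 * pi)) * (LBINT t:{..x}. exp (- t\<^sup>2 / 2))"
proof -
  have int: "integrable lborel (\<lambda>t. indicator {..x} t *\<^sub>R std_normal_density t)"
    using integrable_std_normal_moment[of 0] by (intro integrable_mult_indicator) auto
  have "emeasure std_normal_distribution {..x} = (\<integral>\<^sup>+ t. ennreal (std_normal_density t) * indicator {..x} t \<partial>lborel)"
    by (subst emeasure_density) auto
  also have "\<dots> = (\<integral>\<^sup>+ t. ennreal (indicator {..x} t *\<^sub>R std_normal_density t) \<partial>lborel)"
    by (intro nn_integral_cong) (auto simp: indicator_def)
  also have "\<dots> = ennreal (LINT t|lborel. indicator {..x} t *\<^sub>R std_normal_density t)"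
    using int by (intro nn_integral_eq_integral) (auto simp: normal_density_nonneg)
  finally have e: "emeasure std_normal_distribution {..x} = ennreal (LBINT t:{..x}. std_normal_density t)"
    unfolding set_lebesgue_integral_def .
  have nn: "0 \<le> (LBINT t:{..x}. std_normal_density t)"
    unfolding set_lebesgue_integral_def by (intro integral_nonneg_AE) (auto simp: normal_density_nonneg)
  have "cdf std_normal_distribution x = (LBINT t:{..x}. std_normal_density t)"
    unfolding cdf_def measure_def e using nn by simp
  also have "\<dots> = (LBINT t:{..x}. (1 / sqrt (2 * pi)) * exp (- t\<^sup>2 / 2))"
    by (simp add: std_normal_density_def)
  also have "\<dots> = (1 / sqrt (2 * pi)) * (LBINT t:{..x}. exp (- t\<^sup>2 / 2))"
    by (rule set_integral_mult_right)
  finally show ?thesis .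
qed

lemma std_normal_isCont: "isCont (cdf std_normal_distribution) x"
proof -
  interpret real_distribution std_normal_distribution by (rule real_dist_normal_dist)
  have "emeasure std_normal_distribution {x} = 0"
    by (subst emeasure_density) (auto simp: nn_integral_indicator_singleton')
  then have "measure std_normal_distribution {x} = 0" by (simp add: measure_def)
  then show ?thesis using isCont_cdf by simp
qed

lemma int_image_atMost: "k \<in> int ` {..M} \<longleftrightarrow> 0 \<le> k \<and> k \<le> int M"
proof
  assume "0 \<le> k \<and> k \<le> int M"
  then show "k \<in> int ` {..M}" by (intro image_eqI[of _ _ "nat k"]) auto
qed auto

lemma embed_ok:
  fixes M :: nat and p :: "int \<Rightarrow> real"
  assumes pnn: "\<And>k. 0 \<le> p k" and pz: "\<And>k. k < 0 \<or> k > int M \<Longrightarrow> p k = 0"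
    and psum: "(\<Sum>j\<le>M. p (int j)) = 1"
  shows "(\<integral>\<^sup>+k. ennreal (p k) \<partial>count_space UNIV) = 1"
proof -
  have "(\<integral>\<^sup>+k. ennreal (p k) \<partial>count_space UNIV) = (\<Sum>k\<in>int ` {..M}. ennreal (p k))"
    by (rule nn_integral_count_space') (use pz int_image_atMost in \<open>auto simp: not_le\<close>)
  also have "\<dots> = ennreal (\<Sum>k\<in>int ` {..M}. p k)" using pnn by (simp add: sum_ennreal)
  also have "(\<Sum>k\<in>int ` {..M}. p k) = (\<Sum>j\<le>M. p (int j))" by (simp add: sum.reindex)
  finally show ?thesis using psum by simp
qed

definition Mdist :: "(int \<Rightarrow> real) \<Rightarrow> real \<Rightarrow> real \<Rightarrow> real measure" where
  "Mdist p \<mu> \<sigma> = distr (measure_pmf (embed_pmf p)) borel (\<lambda>k. (real_of_int k - \<mu>) / \<sigma>)"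

lemma Mdist_real_distribution:
  assumes pnn: "\<And>k. 0 \<le> p k" and ok: "(\<integral>\<^sup>+k. ennreal (p k) \<partial>count_space UNIV) = 1"
  shows "real_distribution (Mdist p \<mu> \<sigma>)"
  unfolding real_distribution_def real_distribution_axioms_def Mdist_def
  by (auto intro!: measure_pmf.prob_space_distr simp: measurable_pmf_measure1)

lemma pmf_measure_finite:
  assumes "set_pmf P \<subseteq> S" "finite S"
  shows "measure_pmf.prob P A = (\<Sum>a\<in>A \<inter> S. pmf P a)"
proof -
  have "measure_pmf.prob P A = measure_pmf.prob P (A \<inter> set_pmf P)" by (rule measure_Int_set_pmf[symmetric])
  also have "A \<inter> set_pmf P = (A \<inter> S) \<inter> set_pmf P" using assms by auto
  also have "measure_pmf.prob P ((A \<inter> S) \<inter> set_pmf P) = measure_pmf.prob P (A \<inter> S)" by (rule measure_Int_set_pmf)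
  also have "\<dots> = (\<Sum>a\<in>A \<inter> S. pmf P a)" by (rule measure_measure_pmf_finite) (use assms in auto)
  finally show ?thesis .
qed

lemma Mdist_facts:
  fixes M :: nat and p :: "int \<Rightarrow> real"
  assumes pnn: "\<And>k. 0 \<le> p k" and pz: "\<And>k. k < 0 \<or> k > int M \<Longrightarrow> p k = 0"
    and psum: "(\<Sum>j\<le>M. p (int j)) = 1"
  shows "pmf (embed_pmf p) k = p k" "set_pmf (embed_pmf p) \<subseteq> int ` {..M}"
proof -
  note ok = embed_ok[OF pnn pz psum]
  show "pmf (embed_pmf p) k = p k" by (rule pmf_embed_pmf[OF pnn ok])
  show "set_pmf (embed_pmf p) \<subseteq> int ` {..M}"
  proof
    fix k assume "k \<in> set_pmf (embed_pmf p)"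
    then have "p k \<noteq> 0" using set_embed_pmf[OF pnn ok] by auto
    then have "0 \<le> k \<and> k \<le> int M" using pz by (meson not_le)
    then show "k \<in> int ` {..M}" using int_image_atMost by blast
  qed
qed

lemma Mdist_char:
  fixes M :: nat and p :: "int \<Rightarrow> real"
  assumes pnn: "\<And>k. 0 \<le> p k" and pz: "\<And>k. k < 0 \<or> k > int M \<Longrightarrow> p k = 0"
    and psum: "(\<Sum>j\<le>M. p (int j)) = 1"
  shows "char (Mdist p \<mu> \<sigma>) t = psi_fun M p \<mu> \<sigma> t"
proof -
  note F = Mdist_facts[OF pnn pz psum]
  have "char (Mdist p \<mu> \<sigma>) t = (CLINT k|measure_pmf (embed_pmf p). iexp (t * ((real_of_int k - \<mu>) / \<sigma>)))"
    unfolding char_def Mdist_def by (subst integral_distr) (auto simp: measurable_pmf_measure1)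
  also have "\<dots> = (\<Sum>a\<in>int ` {..M}. pmf (embed_pmf p) a *\<^sub>R iexp (t * ((real_of_int a - \<mu>) / \<sigma>)))"
    by (rule integral_measure_pmf) (use F(2) in auto)
  also have "\<dots> = (\<Sum>j\<le>M. p (int j) *\<^sub>R iexp (t * ((real j - \<mu>) / \<sigma>)))"
    by (simp add: sum.reindex F(1))
  also have "\<dots> = psi_fun M p \<mu> \<sigma> t" unfolding psi_fun_def
    by (intro sum.cong refl) (simp add: scaleR_conv_of_real algebra_simps)
  finally show ?thesis .
qed

lemma Mdist_cdf:
  fixes M :: nat and p :: "int \<Rightarrow> real"
  assumes pnn: "\<And>k. 0 \<le> p k" and pz: "\<And>k. k < 0 \<or> k > int M \<Longrightarrow> p k = 0"
    and psum: "(\<Sum>j\<le>M. p (int j)) = 1" and \<sigma>: "0 < \<sigma>"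
  shows "cdf (Mdist p \<mu> \<sigma>) x = (\<Sum>k\<in>{k. k \<le> M \<and> real k \<le> \<mu> + x * \<sigma>}. p (int k))"
proof -
  note F = Mdist_facts[OF pnn pz psum]
  have "cdf (Mdist p \<mu> \<sigma>) x = measure_pmf.prob (embed_pmf p) {k. (real_of_int k - \<mu>) / \<sigma> \<le> x}"
    unfolding cdf_def Mdist_def by (subst measure_distr) (auto simp: measurable_pmf_measure1 vimage_def)
  also have "\<dots> = (\<Sum>a\<in>{k. (real_of_int k - \<mu>) / \<sigma> \<le> x} \<inter> int ` {..M}. pmf (embed_pmf p) a)"
    by (rule pmf_measure_finite[OF F(2)]) auto
  also have "{k. (real_of_int k - \<mu>) / \<sigma> \<le> x} \<inter> int ` {..M} = int ` {k. k \<le> M \<and> real k \<le> \<mu> + x * \<sigma>}"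
    using \<sigma> by (auto simp: pos_divide_le_eq algebra_simps)
  also have "(\<Sum>a\<in>int ` {k. k \<le> M \<and> real k \<le> \<mu> + x * \<sigma>}. pmf (embed_pmf p) a)
      = (\<Sum>k\<in>{k. k \<le> M \<and> real k \<le> \<mu> + x * \<sigma>}. p (int k))"
    by (simp add: sum.reindex F(1))
  finally show ?thesis .
qed

lemma sup_tendsto_0':
  fixes F :: "nat \<Rightarrow> real \<Rightarrow> real"
  assumes nn: "\<And>n x. 0 \<le> F n x" and ev: "\<And>e. 0 < e \<Longrightarrow> eventually (\<lambda>n. \<forall>x. F n x \<le> e) sequentially"
  shows "(\<lambda>n. SUP x. F n x) \<longlonglongrightarrow> 0"
proof (rule tendstoI)
  fix e :: real assume e: "0 < e"
  have ev2: "eventually (\<lambda>n. \<forall>x. F n x \<le> e/2) sequentially" by (rule ev) (use e in simp)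
  show "eventually (\<lambda>n. dist (SUP x. F n x) 0 < e) sequentially"
    using ev2
  proof eventually_elim
    case (elim n)
    have bdd: "bdd_above (range (F n))" using elim by (intro bdd_aboveI2[where M="e/2"]) blast
    have "0 \<le> F n 0" by (rule nn)
    also have "\<dots> \<le> (SUP x. F n x)" by (rule cSUP_upper[OF _ bdd]) simp
    finally have "0 \<le> (SUP x. F n x)" .
    moreover have "(SUP x. F n x) \<le> e/2" using elim by (intro cSUP_least) blast+
    ultimately show ?case using e by (simp add: dist_real_def)
  qed
qed

lemma psi_close:
  assumes qs01: "\<And>q. q \<in> set qs \<Longrightarrow> 0 \<le> q \<and> q \<le> 1"
    and charid: "\<And>t. (\<Sum>j\<le>M. complex_of_real (p (int j)) * iexp (real j * t)) = chi qs t"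
    and \<sigma>: "\<sigma> = sqrt (qvar qs)" and \<mu>: "\<mu> = sum_list qs" and sp: "0 < \<sigma>" and t: "\<bar>t\<bar> \<le> \<sigma>"
  shows "norm (psi_fun M p \<mu> \<sigma> t - complex_of_real (exp (- t\<^sup>2/2))) \<le> \<bar>t\<bar>^3 / \<sigma>"
proof -
  have qv0: "0 \<le> qvar qs" using qvar_nonneg qs01 by blast
  have \<sigma>sq: "\<sigma>\<^sup>2 = qvar qs" unfolding \<sigma> using qv0 by simp
  have t1: "\<bar>t / \<sigma>\<bar> \<le> 1" using sp t by (simp add: abs_div)
  have "qvar qs * ((t / \<sigma>)\<^sup>2 / 2) = t\<^sup>2/2" unfolding \<sigma>sq[symmetric] using sp by (simp add: field_simps)
  then have "psi_fun M p \<mu> \<sigma> t - complex_of_real (exp (- t\<^sup>2/2))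
      = iexp (- sum_list qs * (t / \<sigma>)) * chi qs (t / \<sigma>) - complex_of_real (exp (- (qvar qs * ((t / \<sigma>)\<^sup>2 / 2))))"
    using psi_chi[OF charid] \<mu> by simp
  then have "norm (psi_fun M p \<mu> \<sigma> t - complex_of_real (exp (- t\<^sup>2/2))) \<le> qvar qs * \<bar>t / \<sigma>\<bar>^3"
    using chi_taylor[OF qs01 t1] by simp
  also have "\<dots> = \<bar>t\<bar>^3 / \<sigma>"
    unfolding \<sigma>sq[symmetric] using sp by (simp add: abs_div power_divide power2_eq_square power3_eq_cube)
  finally show ?thesis .
qed

theorem clt_seq:
  fixes M :: "nat \<Rightarrow> nat" and p :: "nat \<Rightarrow> int \<Rightarrow> real" and qs :: "nat \<Rightarrow> real list"
  assumes pnn: "\<And>n k. 0 \<le> p n k"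
    and pz: "\<And>n k. k < 0 \<or> k > int (M n) \<Longrightarrow> p n k = 0"
    and psum: "\<And>n. (\<Sum>j\<le>M n. p n (int j)) = 1"
    and qs01: "\<And>n q. q \<in> set (qs n) \<Longrightarrow> 0 \<le> q \<and> q \<le> 1"
    and charid: "\<And>n t. (\<Sum>j\<le>M n. complex_of_real (p n (int j)) * iexp (real j * t)) = chi (qs n) t"
    and var_inf: "filterlim (\<lambda>n. qvar (qs n)) at_top sequentially"
  shows "(\<lambda>n. SUP x::real. \<bar>(\<Sum>k\<in>{k. k \<le> M n \<and> real k \<le> sum_list (qs n) + x * sqrt (qvar (qs n))}. p n (int k))
                 - (1 / sqrt (2 * pi)) * (LBINT t:{..x}. exp (- t\<^sup>2 / 2))\<bar>) \<longlonglongrightarrow> 0"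
proof -
  define \<mu> where "\<mu> n = sum_list (qs n)" for n
  define \<sigma> where "\<sigma> n = sqrt (qvar (qs n))" for n
  define Mn where "Mn n = Mdist (p n) (\<mu> n) (\<sigma> n)" for n
  have \<sigma>inf: "filterlim \<sigma> at_top sequentially" unfolding \<sigma>_def
    by (rule filterlim_compose[OF sqrt_at_top var_inf])
  have rd: "real_distribution (Mn n)" for n
    unfolding Mn_def by (rule Mdist_real_distribution[OF pnn embed_ok[OF pnn pz psum]])
  have charc: "(\<lambda>n. char (Mn n) t) \<longlonglongrightarrow> char std_normal_distribution t" for t
  proof -
    have "(\<lambda>n. psi_fun (M n) (p n) (\<mu> n) (\<sigma> n) t - complex_of_real (exp (- t\<^sup>2/2))) \<longlonglongrightarrow> 0"
    proof (rule Lim_null_comparison)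
      have ev: "eventually (\<lambda>n. max 1 \<bar>t\<bar> \<le> \<sigma> n) sequentially"
        using \<sigma>inf unfolding filterlim_at_top by blast
      show "eventually (\<lambda>n. norm (psi_fun (M n) (p n) (\<mu> n) (\<sigma> n) t - complex_of_real (exp (- t\<^sup>2/2))) \<le> \<bar>t\<bar>^3 / \<sigma> n) sequentially"
        using ev
      proof eventually_elim
        case (elim n)
        then have "0 < \<sigma> n" "\<bar>t\<bar> \<le> \<sigma> n" by auto
        then show ?case by (intro psi_close[OF qs01 charid]) (auto simp: \<sigma>_def \<mu>_def)
      qed
      show "(\<lambda>n. \<bar>t\<bar>^3 / \<sigma> n) \<longlonglongrightarrow> 0"
        by (rule tendsto_divide_0[OF tendsto_const filterlim_at_top_imp_at_infinity[OF \<sigma>inf]])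
    qed
    then have "(\<lambda>n. psi_fun (M n) (p n) (\<mu> n) (\<sigma> n) t) \<longlonglongrightarrow> complex_of_real (exp (- t\<^sup>2/2))"
      by (rule LIM_zero_cancel)
    moreover have "char (Mn n) t = psi_fun (M n) (p n) (\<mu> n) (\<sigma> n) t" for n
      unfolding Mn_def by (rule Mdist_char[OF pnn pz psum])
    ultimately show ?thesis by (simp add: char_std_normal_distribution)
  qed
  have wc: "weak_conv_m Mn std_normal_distribution"
    by (rule levy_continuity[OF rd real_dist_normal_dist charc])
  have pw: "(\<lambda>n. cdf (Mn n) x) \<longlonglongrightarrow> cdf std_normal_distribution x" for x
    using wc std_normal_isCont unfolding weak_conv_m_def weak_conv_def by blast
  interpret S: real_distribution std_normal_distribution by (rule real_dist_normal_dist)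
  have unif: "eventually (\<lambda>n. \<forall>x. \<bar>cdf (Mn n) x - cdf std_normal_distribution x\<bar> \<le> e) sequentially"
    if e: "0 < e" for e
  proof (rule polya_uniform[OF _ _ std_normal_isCont _ _ S.cdf_lim_at_bot S.cdf_lim_at_top_prob pw e])
    show "cdf (Mn n) x \<le> cdf (Mn n) y" if "x \<le> y" for n x y
    proof -
      interpret R: real_distribution "Mn n" by (rule rd)
      show ?thesis using R.cdf_nondecreasing[OF that] .
    qed
    show "0 \<le> cdf (Mn n) x \<and> cdf (Mn n) x \<le> 1" for n x
    proof -
      interpret R: real_distribution "Mn n" by (rule rd)
      show ?thesis using R.cdf_nonneg R.cdf_bounded_prob by auto
    qed
    show "cdf std_normal_distribution x \<le> cdf std_normal_distribution y" if "x \<le> y" for x y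
      using S.cdf_nondecreasing[OF that] .
    show "0 \<le> cdf std_normal_distribution x \<and> cdf std_normal_distribution x \<le> 1" for x
      using S.cdf_nonneg S.cdf_bounded_prob by auto
  qed
  have evpos: "eventually (\<lambda>n. 1 \<le> \<sigma> n) sequentially" using \<sigma>inf unfolding filterlim_at_top by blast
  have "(\<lambda>n. SUP x::real. \<bar>(\<Sum>k\<in>{k. k \<le> M n \<and> real k \<le> \<mu> n + x * \<sigma> n}. p n (int k))
                 - (1 / sqrt (2 * pi)) * (LBINT t:{..x}. exp (- t\<^sup>2 / 2))\<bar>) \<longlonglongrightarrow> 0"
  proof (rule sup_tendsto_0')
    fix e :: real assume e: "0 < e"
    show "eventually (\<lambda>n. \<forall>x. \<bar>(\<Sum>k\<in>{k. k \<le> M n \<and> real k \<le> \<mu> n + x * \<sigma> n}. p n (int k))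
                 - (1 / sqrt (2 * pi)) * (LBINT t:{..x}. exp (- t\<^sup>2 / 2))\<bar> \<le> e) sequentially"
      using unif[OF e] evpos
    proof eventually_elim
      case (elim n)
      then have sp: "0 < \<sigma> n" by simp
      show ?case
      proof
        fix x
        have "cdf (Mn n) x = (\<Sum>k\<in>{k. k \<le> M n \<and> real k \<le> \<mu> n + x * \<sigma> n}. p n (int k))"
          unfolding Mn_def by (rule Mdist_cdf[OF pnn pz psum sp])
        moreover have "\<bar>cdf (Mn n) x - cdf std_normal_distribution x\<bar> \<le> e" using elim by blast
        ultimately show "\<bar>(\<Sum>k\<in>{k. k \<le> M n \<and> real k \<le> \<mu> n + x * \<sigma> n}. p n (int k))
                 - (1 / sqrt (2 * pi)) * (LBINT t:{..x}. exp (- t\<^sup>2 / 2))\<bar> \<le> e"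
          unfolding std_normal_cdf_eq by simp
      qed
    qed
  qed simp
  then show ?thesis unfolding \<mu>_def \<sigma>_def .
qed

definition Qp :: "real list \<Rightarrow> real poly" where "Qp rs = prod_list (map (\<lambda>r. [:r, 1:]) rs)"

lemma Qp_Cons: "Qp (r # rs) = Polynomial.smult r (Qp rs) + pCons 0 (Qp rs)"
  by (simp add: Qp_def mult_pCons_left)

lemma coeff_Qp_Cons: "coeff (Qp (r # rs)) k = r * coeff (Qp rs) k + (if k = 0 then 0 else coeff (Qp rs) (k - 1))"
  by (cases k) (simp_all add: Qp_Cons)

lemma coeff_Qp_zero: "length rs < k \<Longrightarrow> coeff (Qp rs) k = 0"
proof (induction rs arbitrary: k)
  case Nil then show ?case by (simp add: Qp_def)
next
  case (Cons r rs)
  then show ?case by (simp add: coeff_Qp_Cons)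
qed

lemma coeff_Qp_nonneg: "(\<And>r. r \<in> set rs \<Longrightarrow> 0 \<le> r) \<Longrightarrow> 0 \<le> coeff (Qp rs) k"
proof (induction rs arbitrary: k)
  case Nil then show ?case by (simp add: Qp_def coeff_1)
next
  case (Cons r rs)
  then show ?case by (simp add: coeff_Qp_Cons)
qed

lemma shift_sum:
  fixes f :: "nat \<Rightarrow> 'a::{real_algebra_1, comm_ring_1}"
  shows "(\<Sum>k\<le>Suc (length rs). f k * of_real (coeff (Qp (r # rs)) k))
       = of_real r * (\<Sum>k\<le>length rs. f k * of_real (coeff (Qp rs) k)) + (\<Sum>k\<le>length rs. f (Suc k) * of_real (coeff (Qp rs) k))"
proof -
  let ?c = "coeff (Qp rs)"
  have "(\<Sum>k\<le>Suc (length rs). f k * of_real (coeff (Qp (r # rs)) k))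
      = (\<Sum>k\<le>Suc (length rs). of_real r * (f k * of_real (?c k))) + (\<Sum>k\<le>Suc (length rs). f k * of_real (if k = 0 then 0 else ?c (k - 1)))"
    unfolding coeff_Qp_Cons by (simp add: sum.distrib algebra_simps)
  also have "(\<Sum>k\<le>Suc (length rs). of_real r * (f k * of_real (?c k))) = of_real r * (\<Sum>k\<le>length rs. f k * of_real (?c k))"
    by (simp add: sum_distrib_left coeff_Qp_zero)
  also have "(\<Sum>k\<le>Suc (length rs). f k * of_real (if k = 0 then 0 else ?c (k - 1))) = (\<Sum>k\<le>length rs. f (Suc k) * of_real (?c k))"
    by (subst sum.atMost_Suc_shift) simp
  finally show ?thesis .
qed

definition Pi_r :: "real list \<Rightarrow> real" where "Pi_r rs = prod_list (map (\<lambda>r. 1 + r) rs)"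
definition qs_of :: "real list \<Rightarrow> real list" where "qs_of rs = map (\<lambda>r. 1 / (1 + r)) rs"

lemma Pi_r_pos: "(\<And>r. r \<in> set rs \<Longrightarrow> 0 \<le> r) \<Longrightarrow> 0 < Pi_r rs"
  unfolding Pi_r_def by (induction rs) (auto intro!: mult_pos_pos simp: add_pos_nonneg)

lemma qs_of_01: "(\<And>r. r \<in> set rs \<Longrightarrow> 0 \<le> r) \<Longrightarrow> q \<in> set (qs_of rs) \<Longrightarrow> 0 \<le> q \<and> q \<le> 1"
proof -
  assume r: "\<And>r. r \<in> set rs \<Longrightarrow> 0 \<le> r" and "q \<in> set (qs_of rs)"
  then obtain r where "r \<in> set rs" "q = 1 / (1 + r)" unfolding qs_of_def by auto
  moreover have "0 \<le> r" using r calculation by auto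
  ultimately show ?thesis by (simp add: divide_le_eq)
qed

lemma A0: "(\<Sum>k\<le>length rs. coeff (Qp rs) k) = Pi_r rs"
proof (induction rs)
  case Nil then show ?case by (simp add: Qp_def Pi_r_def)
next
  case (Cons r rs)
  have "(\<Sum>k\<le>length (r # rs). coeff (Qp (r # rs)) k) = (\<Sum>k\<le>Suc (length rs). 1 * of_real (coeff (Qp (r # rs)) k))"
    by simp
  also have "\<dots> = r * (\<Sum>k\<le>length rs. coeff (Qp rs) k) + (\<Sum>k\<le>length rs. coeff (Qp rs) k)"
    unfolding shift_sum by simp
  finally show ?case using Cons by (simp add: Pi_r_def algebra_simps)
qed


lemma Pi_r_Cons: "Pi_r (r # rs) = (1 + r) * Pi_r rs" by (simp add: Pi_r_def)
lemma qs_of_Cons: "sum_list (qs_of (r # rs)) = 1 / (1 + r) + sum_list (qs_of rs)" by (simp add: qs_of_def)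
lemma qvar_qs_of_Cons: "qvar (qs_of (r # rs)) = 1 / (1 + r) * (1 - 1 / (1 + r)) + qvar (qs_of rs)"
  by (simp add: qs_of_def qvar_def)

lemma A1: "(\<And>r. r \<in> set rs \<Longrightarrow> 0 \<le> r) \<Longrightarrow>
  (\<Sum>k\<le>length rs. real k * coeff (Qp rs) k) = Pi_r rs * sum_list (qs_of rs)"
proof (induction rs)
  case Nil then show ?case by (simp add: Qp_def Pi_r_def qs_of_def)
next
  case (Cons r rs)
  have r: "0 \<le> r" using Cons.prems by simp
  have IH: "(\<Sum>k\<le>length rs. real k * coeff (Qp rs) k) = Pi_r rs * sum_list (qs_of rs)"
    using Cons by simp
  have "(\<Sum>k\<le>length (r # rs). real k * coeff (Qp (r # rs)) k) = (\<Sum>k\<le>Suc (length rs). real k * of_real (coeff (Qp (r # rs)) k))"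
    by simp
  also have "\<dots> = r * (\<Sum>k\<le>length rs. real k * coeff (Qp rs) k) + (\<Sum>k\<le>length rs. real (Suc k) * coeff (Qp rs) k)"
    unfolding shift_sum by simp
  also have "(\<Sum>k\<le>length rs. real (Suc k) * coeff (Qp rs) k) = (\<Sum>k\<le>length rs. real k * coeff (Qp rs) k) + (\<Sum>k\<le>length rs. coeff (Qp rs) k)"
    by (simp add: sum.distrib algebra_simps)
  finally have step: "(\<Sum>k\<le>length (r # rs). real k * coeff (Qp (r # rs)) k)
      = r * (Pi_r rs * sum_list (qs_of rs)) + (Pi_r rs * sum_list (qs_of rs) + Pi_r rs)"
    unfolding IH A0 .
  have "1 + r \<noteq> 0" using r by simp
  then show ?case unfolding step Pi_r_Cons qs_of_Cons by (simp add: field_simps)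
qed

lemma A2: "(\<And>r. r \<in> set rs \<Longrightarrow> 0 \<le> r) \<Longrightarrow>
  (\<Sum>k\<le>length rs. (real k)\<^sup>2 * coeff (Qp rs) k) = Pi_r rs * ((sum_list (qs_of rs))\<^sup>2 + qvar (qs_of rs))"
proof (induction rs)
  case Nil then show ?case by (simp add: Qp_def Pi_r_def qs_of_def qvar_def)
next
  case (Cons r rs)
  have r: "0 \<le> r" using Cons.prems by simp
  have rs: "\<And>x. x \<in> set rs \<Longrightarrow> 0 \<le> x" using Cons.prems by simp
  have IH: "(\<Sum>k\<le>length rs. (real k)\<^sup>2 * coeff (Qp rs) k) = Pi_r rs * ((sum_list (qs_of rs))\<^sup>2 + qvar (qs_of rs))"
    using Cons by simp
  have A1rs: "(\<Sum>k\<le>length rs. real k * coeff (Qp rs) k) = Pi_r rs * sum_list (qs_of rs)"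
    using A1[of rs] rs by blast
  have "(\<Sum>k\<le>length (r # rs). (real k)\<^sup>2 * coeff (Qp (r # rs)) k) = (\<Sum>k\<le>Suc (length rs). (real k)\<^sup>2 * of_real (coeff (Qp (r # rs)) k))"
    by simp
  also have "\<dots> = r * (\<Sum>k\<le>length rs. (real k)\<^sup>2 * coeff (Qp rs) k) + (\<Sum>k\<le>length rs. (real (Suc k))\<^sup>2 * coeff (Qp rs) k)"
    unfolding shift_sum by simp
  also have "(\<Sum>k\<le>length rs. (real (Suc k))\<^sup>2 * coeff (Qp rs) k)
     = (\<Sum>k\<le>length rs. (real k)\<^sup>2 * coeff (Qp rs) k) + 2 * (\<Sum>k\<le>length rs. real k * coeff (Qp rs) k) + (\<Sum>k\<le>length rs. coeff (Qp rs) k)"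
    by (simp add: sum.distrib sum_distrib_left power2_eq_square algebra_simps)
  finally have step: "(\<Sum>k\<le>length (r # rs). (real k)\<^sup>2 * coeff (Qp (r # rs)) k)
     = r * (Pi_r rs * ((sum_list (qs_of rs))\<^sup>2 + qvar (qs_of rs)))
       + (Pi_r rs * ((sum_list (qs_of rs))\<^sup>2 + qvar (qs_of rs)) + 2 * (Pi_r rs * sum_list (qs_of rs)) + Pi_r rs)"
    unfolding IH A0 A1rs .
  define a where "a = 1 / (1 + r)"
  define \<mu> where "\<mu> = sum_list (qs_of rs)"
  define v where "v = qvar (qs_of rs)"
  define P where "P = Pi_r rs"
  have ha: "(1 + r) * a = 1" using r unfolding a_def by simp
  have e1: "(a + \<mu>)\<^sup>2 + a * (1 - a) + v = (\<mu>\<^sup>2 + v) + a * (2 * \<mu> + 1)"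
    by (simp add: power2_eq_square algebra_simps)
  have "(1 + r) * P * ((a + \<mu>)\<^sup>2 + (a * (1 - a) + v)) = (1 + r) * P * (\<mu>\<^sup>2 + v) + ((1 + r) * a) * P * (2 * \<mu> + 1)"
    using e1 by (simp add: algebra_simps)
  also have "\<dots> = r * (P * (\<mu>\<^sup>2 + v)) + (P * (\<mu>\<^sup>2 + v) + 2 * (P * \<mu>) + P)"
    unfolding ha by (simp add: algebra_simps)
  finally show ?case unfolding step Pi_r_Cons qs_of_Cons qvar_qs_of_Cons a_def[symmetric] \<mu>_def[symmetric] v_def[symmetric] P_def[symmetric] by (rule sym)
qed

lemma Gsum:
  fixes z :: complex
  shows "(\<Sum>k\<le>length rs. z ^ k * complex_of_real (coeff (Qp rs) k)) = prod_list (map (\<lambda>r. complex_of_real r + z) rs)"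
proof (induction rs)
  case Nil then show ?case by (simp add: Qp_def)
next
  case (Cons r rs)
  have "(\<Sum>k\<le>length (r # rs). z ^ k * complex_of_real (coeff (Qp (r # rs)) k))
      = complex_of_real r * (\<Sum>k\<le>length rs. z ^ k * complex_of_real (coeff (Qp rs) k)) + (\<Sum>k\<le>length rs. z ^ Suc k * complex_of_real (coeff (Qp rs) k))"
    using shift_sum[where f = "\<lambda>k. z ^ k" and rs = rs and r = r] by simp
  also have "(\<Sum>k\<le>length rs. z ^ Suc k * complex_of_real (coeff (Qp rs) k)) = z * (\<Sum>k\<le>length rs. z ^ k * complex_of_real (coeff (Qp rs) k))"
    by (simp add: sum_distrib_left mult.assoc)
  finally show ?case using Cons by (simp add: algebra_simps)
qed

definition bdist :: "real list \<Rightarrow> int \<Rightarrow> real" where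
  "bdist rs k = (if 0 \<le> k \<and> k \<le> int (length rs) then coeff (Qp rs) (nat k) / Pi_r rs else 0)"

lemma prod_shift_chi:
  fixes z :: complex
  assumes rnn: "\<And>r. r \<in> set rs \<Longrightarrow> 0 \<le> r"
  shows "prod_list (map (\<lambda>r. complex_of_real r + z) rs)
       = complex_of_real (Pi_r rs) * prod_list (map (\<lambda>q. 1 - complex_of_real q + complex_of_real q * z) (qs_of rs))"
  using rnn
proof (induction rs)
  case Nil then show ?case by (simp add: Pi_r_def qs_of_def)
next
  case (Cons r rs)
  have r: "0 \<le> r" using Cons.prems by simp
  define a where "a = complex_of_real (1 / (1 + r))"
  have "(1 + r) * (1 / (1 + r)) = 1" using r by simp
  then have h: "complex_of_real (1 + r) * a = 1" unfolding a_def by (metis of_real_1 of_real_mult)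
  have "complex_of_real (1 + r) * (1 - a + a * z) = complex_of_real (1 + r) - complex_of_real (1 + r) * a + (complex_of_real (1 + r) * a) * z"
    by (simp add: algebra_simps)
  also have "\<dots> = complex_of_real r + z" unfolding h by simp
  finally have e: "complex_of_real r + z = complex_of_real (1 + r) * (1 - a + a * z)" by simp
  have IH: "prod_list (map (\<lambda>r. complex_of_real r + z) rs)
       = complex_of_real (Pi_r rs) * prod_list (map (\<lambda>q. 1 - complex_of_real q + complex_of_real q * z) (qs_of rs))"
    using Cons by simp
  show ?case unfolding list.map prod_list.Cons e IH
    by (simp add: Pi_r_def qs_of_def a_def)
qed

context
  fixes rs :: "real list"
  assumes rnn: "\<And>r. r \<in> set rs \<Longrightarrow> 0 \<le> r"
begin

lemma Pi_pos': "0 < Pi_r rs" using Pi_r_pos rnn by blast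
lemma cnn': "0 \<le> coeff (Qp rs) k" using coeff_Qp_nonneg rnn by blast
lemma A1': "(\<Sum>k\<le>length rs. real k * coeff (Qp rs) k) = Pi_r rs * sum_list (qs_of rs)" using A1 rnn by blast
lemma A2': "(\<Sum>k\<le>length rs. (real k)\<^sup>2 * coeff (Qp rs) k) = Pi_r rs * ((sum_list (qs_of rs))\<^sup>2 + qvar (qs_of rs))"
  using A2 rnn by blast

lemma bdist_nonneg: "0 \<le> bdist rs k"
  unfolding bdist_def using cnn' Pi_pos' by simp

lemma bdist_zero: "k < 0 \<or> k > int (length rs) \<Longrightarrow> bdist rs k = 0"
  unfolding bdist_def by auto

lemma bdist_int: "j \<le> length rs \<Longrightarrow> bdist rs (int j) = coeff (Qp rs) j / Pi_r rs"
  unfolding bdist_def by simp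

lemma bdist_sum: "(\<Sum>j\<le>length rs. bdist rs (int j)) = 1"
proof -
  have "(\<Sum>j\<le>length rs. bdist rs (int j)) = (\<Sum>j\<le>length rs. coeff (Qp rs) j) / Pi_r rs"
    by (simp add: bdist_int sum_divide_distrib)
  then show ?thesis using A0[of rs] Pi_pos' by simp
qed

lemma bdist_mean: "(\<Sum>k\<le>length rs. real k * bdist rs (int k)) = sum_list (qs_of rs)"
proof -
  have "(\<Sum>k\<le>length rs. real k * bdist rs (int k)) = (\<Sum>k\<le>length rs. real k * coeff (Qp rs) k) / Pi_r rs"
    by (simp add: bdist_int sum_divide_distrib)
  then show ?thesis using A1' Pi_pos' by simp
qed

lemma bdist_var: "(\<Sum>k\<le>length rs. (real k - sum_list (qs_of rs))\<^sup>2 * bdist rs (int k)) = qvar (qs_of rs)"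
proof -
  define \<mu> where "\<mu> = sum_list (qs_of rs)"
  have "(\<Sum>k\<le>length rs. (real k - \<mu>)\<^sup>2 * bdist rs (int k)) = (\<Sum>k\<le>length rs. (real k - \<mu>)\<^sup>2 * coeff (Qp rs) k) / Pi_r rs"
    by (simp add: bdist_int sum_divide_distrib)
  also have "(\<Sum>k\<le>length rs. (real k - \<mu>)\<^sup>2 * coeff (Qp rs) k)
     = (\<Sum>k\<le>length rs. (real k)\<^sup>2 * coeff (Qp rs) k) - 2 * \<mu> * (\<Sum>k\<le>length rs. real k * coeff (Qp rs) k)
        + \<mu>\<^sup>2 * (\<Sum>k\<le>length rs. coeff (Qp rs) k)"
  proof -
    have "(real k - \<mu>)\<^sup>2 * coeff (Qp rs) k = (real k)\<^sup>2 * coeff (Qp rs) k - 2 * \<mu> * (real k * coeff (Qp rs) k) + \<mu>\<^sup>2 * coeff (Qp rs) k" for k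
      by (simp add: power2_eq_square algebra_simps)
    then show ?thesis by (simp add: sum.distrib sum_subtractf sum_distrib_left)
  qed
  also have "\<dots> = Pi_r rs * qvar (qs_of rs)"
    unfolding A0 A1' A2' \<mu>_def[symmetric] by (simp add: power2_eq_square algebra_simps)
  finally show ?thesis unfolding \<mu>_def using Pi_pos' by simp
qed

lemma bdist_char: "(\<Sum>j\<le>length rs. complex_of_real (bdist rs (int j)) * iexp (real j * t)) = chi (qs_of rs) t"
proof -
  have "(\<Sum>j\<le>length rs. complex_of_real (bdist rs (int j)) * iexp (real j * t))
      = (\<Sum>j\<le>length rs. iexp t ^ j * complex_of_real (coeff (Qp rs) j)) / complex_of_real (Pi_r rs)"
    by (simp add: bdist_int sum_divide_distrib exp_of_nat_mult[symmetric] algebra_simps)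
  also have "\<dots> = prod_list (map (\<lambda>r. complex_of_real r + iexp t) rs) / complex_of_real (Pi_r rs)"
    unfolding Gsum ..
  also have "\<dots> = chi (qs_of rs) t"
  proof -
    have ps: "prod_list (map (\<lambda>r. complex_of_real r + iexp t) rs)
       = complex_of_real (Pi_r rs) * prod_list (map (\<lambda>q. 1 - complex_of_real q + complex_of_real q * iexp t) (qs_of rs))"
      using prod_shift_chi rnn by blast
    show ?thesis unfolding ps chi_def using Pi_pos' by simp
  qed
  finally show ?thesis .
qed

end

lemma lap_carrier: "laplacian K F \<in> carrier_mat K K"
  unfolding laplacian_def by simp

lemma lap_entry: "i < K \<Longrightarrow> j < K \<Longrightarrow>
  laplacian K F $$ (i,j) = (if i = j then real (graph_degree K F i) else 0) - (if F i j then 1 else 0)"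
  unfolding laplacian_def by simp

lemma deg_sum: "real (graph_degree K F i) = (\<Sum>j<K. if F i j then 1 else 0)"
proof -
  have "{u. u < K \<and> F i u} = {u \<in> {..<K}. F i u}" by auto
  then have "graph_degree K F i = card {u \<in> {..<K}. F i u}" unfolding graph_degree_def by simp
  also have "\<dots> = (\<Sum>u\<in>{u \<in> {..<K}. F i u}. 1)" by simp
  also have "\<dots> = (\<Sum>u<K. if F i u then 1 else 0)" by (subst sum.inter_filter) auto
  finally show ?thesis by (auto simp: of_nat_sum intro!: sum.cong)
qed

lemma sym_antisym_sum:
  fixes L a :: "nat \<Rightarrow> nat \<Rightarrow> real"
  assumes Ls: "\<And>i j. i < K \<Longrightarrow> j < K \<Longrightarrow> L j i = L i j" and aa: "\<And>i j. a j i = - a i j"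
  shows "(\<Sum>i<K. \<Sum>j<K. L i j * a i j) = 0"
proof -
  have "(\<Sum>i<K. \<Sum>j<K. L i j * a i j) = (\<Sum>j<K. \<Sum>i<K. L i j * a i j)" by (rule sum.swap)
  also have "\<dots> = (\<Sum>j<K. \<Sum>i<K. - (L j i * a j i))"
  proof (intro sum.cong refl)
    fix i j assume "i \<in> {..<K}" "j \<in> {..<K}"
    then show "L i j * a i j = - (L j i * a j i)" using Ls[of i j] aa[of i j] by simp
  qed
  also have "\<dots> = - (\<Sum>i<K. \<Sum>j<K. L i j * a i j)" by (simp add: sum_negf)
  finally show ?thesis by simp
qed

lemma lap_quad_nonneg:
  fixes x :: "nat \<Rightarrow> real"
  assumes sg: "simple_graph K F"
  shows "0 \<le> (\<Sum>i<K. \<Sum>j<K. laplacian K F $$ (i,j) * (x i * x j))"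
proof -
  define e where "e i j = (if F i j then 1 else 0 :: real)" for i j
  have es: "e j i = e i j" if "i < K" "j < K" for i j using sg that unfolding simple_graph_def e_def by auto
  have eii: "e i i = 0" if "i < K" for i using sg that unfolding simple_graph_def e_def by auto
  have "(\<Sum>i<K. \<Sum>j<K. laplacian K F $$ (i,j) * (x i * x j))
      = (\<Sum>i<K. \<Sum>j<K. (if i = j then real (graph_degree K F i) * (x i * x i) else 0) - e i j * (x i * x j))"
    by (intro sum.cong refl) (simp add: lap_entry e_def algebra_simps)
  also have "\<dots> = (\<Sum>i<K. real (graph_degree K F i) * (x i * x i)) - (\<Sum>i<K. \<Sum>j<K. e i j * (x i * x j))"
    by (simp add: sum_subtractf)
  also have "(\<Sum>i<K. real (graph_degree K F i) * (x i * x i)) = (\<Sum>i<K. \<Sum>j<K. e i j * (x i * x i))"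
    unfolding deg_sum e_def by (simp add: sum_distrib_right)
  finally have T: "(\<Sum>i<K. \<Sum>j<K. laplacian K F $$ (i,j) * (x i * x j)) = (\<Sum>i<K. \<Sum>j<K. e i j * (x i * x i - x i * x j))"
    by (simp add: sum_subtractf[symmetric] right_diff_distrib)
  have T2: "(\<Sum>i<K. \<Sum>j<K. e i j * (x i * x i - x i * x j)) = (\<Sum>i<K. \<Sum>j<K. e i j * (x j * x j - x j * x i))"
  proof -
    have "(\<Sum>i<K. \<Sum>j<K. e i j * (x i * x i - x i * x j)) = (\<Sum>j<K. \<Sum>i<K. e i j * (x i * x i - x i * x j))"
      by (rule sum.swap)
    also have "\<dots> = (\<Sum>j<K. \<Sum>i<K. e j i * (x i * x i - x i * x j))"
      by (intro sum.cong refl) (simp add: es)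
    finally show ?thesis by simp
  qed
  have "2 * (\<Sum>i<K. \<Sum>j<K. e i j * (x i * x i - x i * x j)) = (\<Sum>i<K. \<Sum>j<K. e i j * (x i - x j)\<^sup>2)"
  proof -
    have "2 * (\<Sum>i<K. \<Sum>j<K. e i j * (x i * x i - x i * x j))
        = (\<Sum>i<K. \<Sum>j<K. e i j * (x i * x i - x i * x j)) + (\<Sum>i<K. \<Sum>j<K. e i j * (x j * x j - x j * x i))"
      using T2 by simp
    also have "\<dots> = (\<Sum>i<K. \<Sum>j<K. e i j * (x i - x j)\<^sup>2)"
      by (simp add: sum.distrib[symmetric] power2_eq_square algebra_simps)
    finally show ?thesis .
  qed
  moreover have "0 \<le> (\<Sum>i<K. \<Sum>j<K. e i j * (x i - x j)\<^sup>2)"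
    by (intro sum_nonneg) (auto simp: e_def)
  ultimately show ?thesis unfolding T by simp
qed

lemma lap_sym: "simple_graph K F \<Longrightarrow> i < K \<Longrightarrow> j < K \<Longrightarrow> laplacian K F $$ (j,i) = laplacian K F $$ (i,j)"
  unfolding simple_graph_def by (auto simp: lap_entry)

lemma lap_eig:
  assumes sg: "simple_graph K F" and ev: "eigenvalue (map_mat complex_of_real (laplacian K F)) a"
  shows "Im a = 0 \<and> 0 \<le> Re a"
proof -
  define L where "L = laplacian K F"
  define A where "A = map_mat complex_of_real L"
  have LK: "L \<in> carrier_mat K K" unfolding L_def by (rule lap_carrier)
  have AK: "A \<in> carrier_mat K K" unfolding A_def using LK by simp
  from ev obtain v where v: "v \<in> carrier_vec K" "v \<noteq> 0\<^sub>v K" "A *\<^sub>v v = a \<cdot>\<^sub>v v"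
    unfolding eigenvalue_def eigenvector_def A_def[symmetric] L_def[symmetric] using AK by auto
  have comp: "(\<Sum>j<K. complex_of_real (L $$ (i,j)) * v $ j) = a * v $ i" if i: "i < K" for i
  proof -
    have "(A *\<^sub>v v) $ i = (a \<cdot>\<^sub>v v) $ i" using v(3) by simp
    moreover have "(A *\<^sub>v v) $ i = (\<Sum>j<K. complex_of_real (L $$ (i,j)) * v $ j)"
      using i AK v(1) LK by (simp add: mult_mat_vec_def scalar_prod_def A_def atLeast0LessThan)
    moreover have "(a \<cdot>\<^sub>v v) $ i = a * v $ i" using i v(1) by simp
    ultimately show ?thesis by simp
  qed
  define nv where "nv = (\<Sum>i<K. (cmod (v $ i))\<^sup>2)"
  have nvpos: "0 < nv"
  proof -
    obtain i where i: "i < K" "v $ i \<noteq> 0" using v(1,2) by (metis carrier_vecD eq_vecI index_zero_vec(1) index_zero_vec(2))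
    have "0 < (cmod (v $ i))\<^sup>2" using i by simp
    then show ?thesis unfolding nv_def using i by (intro sum_pos2[of _ i]) auto
  qed
  define s where "s = (\<Sum>i<K. cnj (v $ i) * (a * v $ i))"
  have s1: "s = a * complex_of_real nv"
  proof -
    have tt: "cnj (v $ i) * (a * v $ i) = a * complex_of_real ((cmod (v $ i))\<^sup>2)" for i
      by (simp only: complex_norm_square) (simp add: algebra_simps)
    show ?thesis unfolding s_def nv_def of_real_sum sum_distrib_left by (intro sum.cong refl tt)
  qed
  have s2: "s = (\<Sum>i<K. \<Sum>j<K. cnj (v $ i) * (complex_of_real (L $$ (i,j)) * v $ j))"
    unfolding s_def by (simp add: comp[symmetric] sum_distrib_left)
  define x where "x i = Re (v $ i)" for i
  define y where "y i = Im (v $ i)" for i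
  have "Re s = (\<Sum>i<K. \<Sum>j<K. L $$ (i,j) * (x i * x j)) + (\<Sum>i<K. \<Sum>j<K. L $$ (i,j) * (y i * y j))"
  proof -
    have t: "Re (cnj (v $ i) * (complex_of_real (L $$ (i,j)) * v $ j)) = L $$ (i,j) * (x i * x j) + L $$ (i,j) * (y i * y j)" for i j
      unfolding x_def y_def by (simp add: algebra_simps)
    show ?thesis unfolding s2 Re_sum t by (simp add: sum.distrib)
  qed
  then have Res: "0 \<le> Re s" using lap_quad_nonneg[OF sg, of x] lap_quad_nonneg[OF sg, of y] unfolding L_def by simp
  have "Im s = (\<Sum>i<K. \<Sum>j<K. L $$ (i,j) * (x i * y j - y i * x j))"
  proof -
    have t: "Im (cnj (v $ i) * (complex_of_real (L $$ (i,j)) * v $ j)) = L $$ (i,j) * (x i * y j - y i * x j)" for i j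
      unfolding x_def y_def by (simp add: algebra_simps)
    show ?thesis unfolding s2 Im_sum t ..
  qed
  also have "\<dots> = 0"
    by (rule sym_antisym_sum) (auto simp: L_def intro: lap_sym[OF sg])
  finally have Ims: "Im s = 0" .
  have "Re s = Re a * nv" "Im s = Im a * nv" unfolding s1 by simp_all
  then show ?thesis using Res Ims nvpos by (simp add: zero_le_mult_iff)
qed

lemma mp_step: "map_poly (of_real::real\<Rightarrow>complex) ([:- a, 1:] * P) = [:- complex_of_real a, 1:] * map_poly of_real P"
  by (simp only: mult_pCons_left of_real_hom.map_poly_hom_add of_real_hom.map_poly_hom_smult of_real_hom.map_poly_pCons_hom)
     (simp add: of_real_hom.map_poly_hom_smult)

lemma mp_prod: "map_poly (of_real::real\<Rightarrow>complex) (prod_list (map (\<lambda>r. [:- r, 1:]) ls)) = prod_list (map (\<lambda>r. [:- complex_of_real r, 1:]) ls)"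
  by (induction ls) (simp_all only: list.map prod_list.Cons prod_list.Nil mp_step, simp_all)

lemma lap_real_factor:
  assumes sg: "simple_graph K F"
  shows "\<exists>ls. char_poly (laplacian K F) = prod_list (map (\<lambda>r. [:- r, 1:]) ls) \<and> length ls = K \<and> (\<forall>r\<in>set ls. 0 \<le> r)"
proof -
  define L where "L = laplacian K F"
  define A where "A = map_mat complex_of_real L"
  have LK: "L \<in> carrier_mat K K" unfolding L_def by (rule lap_carrier)
  have AK: "A \<in> carrier_mat K K" unfolding A_def using LK by simp
  obtain as where as: "char_poly A = prod_list (map (\<lambda>a. [:- a, 1:]) as)" "length as = K"
    using char_poly_factorized[OF AK] by blast
  have real: "a = complex_of_real (Re a) \<and> 0 \<le> Re a" if a: "a \<in> set as" for a
  proof -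
    have "poly (char_poly A) a = 0" unfolding as(1) using a by (rule linear_poly_root)
    then have "eigenvalue A a" using eigenvalue_root_char_poly[OF AK] by simp
    then have "Im a = 0 \<and> 0 \<le> Re a" using lap_eig[OF sg] unfolding A_def L_def by blast
    then show ?thesis by (simp add: complex_eq_iff)
  qed
  define ls where "ls = map Re as"
  have "prod_list (map (\<lambda>a. [:- a, 1:]) as) = prod_list (map (\<lambda>r. [:- complex_of_real r, 1:]) ls)"
    unfolding ls_def map_map o_def
    by (rule arg_cong[where f = prod_list], rule map_cong[OF refl]) (use real in auto)
  also have "\<dots> = map_poly of_real (prod_list (map (\<lambda>r. [:- r, 1:]) ls))" by (rule mp_prod[symmetric])
  finally have e1: "char_poly A = map_poly of_real (prod_list (map (\<lambda>r. [:- r, 1:]) ls))"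
    using as(1) by simp
  have e2: "char_poly A = map_poly complex_of_real (char_poly L)"
    unfolding A_def by (rule of_real_hom.char_poly_hom[OF LK])
  have "map_poly complex_of_real (char_poly L) = map_poly of_real (prod_list (map (\<lambda>r. [:- r, 1:]) ls))"
    using e1 e2 by simp
  then have "char_poly L = prod_list (map (\<lambda>r. [:- r, 1:]) ls)" by (simp add: poly_eq_iff)
  moreover have "length ls = K" using as(2) unfolding ls_def by simp
  moreover have "\<forall>r\<in>set ls. 0 \<le> r" using real unfolding ls_def by auto
  ultimately show ?thesis unfolding L_def by blast
qed

definition mtr :: "real mat \<Rightarrow> real" where "mtr A = (\<Sum>i<dim_row A. A $$ (i,i))"

lemma mtr_prod: "A \<in> carrier_mat n n \<Longrightarrow> B \<in> carrier_mat n n \<Longrightarrow> mtr (A * B) = (\<Sum>i<n. \<Sum>k<n. A $$ (i,k) * B $$ (k,i))"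
  unfolding mtr_def by (simp add: scalar_prod_def atLeast0LessThan)

lemma mtr_mult_comm: "A \<in> carrier_mat n n \<Longrightarrow> B \<in> carrier_mat n n \<Longrightarrow> mtr (A * B) = mtr (B * A)"
  unfolding mtr_prod by (subst sum.swap) (simp add: mult.commute)

lemma mtr_sim:
  assumes P: "P \<in> carrier_mat n n" and X: "X \<in> carrier_mat n n" and Q: "Q \<in> carrier_mat n n" and QP: "Q * P = 1\<^sub>m n"
  shows "mtr (P * X * Q) = mtr X"
proof -
  have "mtr (P * X * Q) = mtr (Q * (P * X))" using P X Q by (intro mtr_mult_comm) auto
  also have "Q * (P * X) = (Q * P) * X" using P X Q by (simp add: assoc_mult_mat)
  also have "\<dots> = X" using QP X by simp
  finally show ?thesis .
qed

lemma schur_traces: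
  assumes LK: "L \<in> carrier_mat n n" and cp: "char_poly L = prod_list (map (\<lambda>e. [:- e, 1:]) es)"
  shows "mtr L = sum_list es" "mtr (L * L) = sum_list (map (\<lambda>x. x\<^sup>2) es)"
proof -
  obtain B P Q where sd: "schur_decomposition L es = (B, P, Q)" by (cases "schur_decomposition L es") auto
  from schur_decomposition[OF LK cp sd] have sim: "similar_mat_wit L B P Q" and ut: "upper_triangular B"
    and dg: "diag_mat B = es" by auto
  have B: "B \<in> carrier_mat n n" and P: "P \<in> carrier_mat n n" and Q: "Q \<in> carrier_mat n n"
    and QP: "Q * P = 1\<^sub>m n" and LPBQ: "L = P * B * Q"
    using similar_mat_witD2[OF LK sim] by auto
  have es: "es = map (\<lambda>i. B $$ (i,i)) [0..<n]" using dg B unfolding diag_mat_def by simp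
  have "mtr L = mtr B" unfolding LPBQ by (rule mtr_sim[OF P B Q QP])
  also have "\<dots> = sum_list es" unfolding es mtr_def using B by (simp add: sum_list_sum_nth atLeast0LessThan)
  finally show "mtr L = sum_list es" .
  have "L * L = P * (B * B) * Q"
  proof -
    have "L * L = P * B * (Q * (P * B * Q))" unfolding LPBQ using P B Q by (simp add: assoc_mult_mat[of _ n n _ n _ n])
    also have "Q * (P * B * Q) = (Q * P) * B * Q" using P B Q by (simp add: assoc_mult_mat[of _ n n _ n _ n])
    also have "\<dots> = B * Q" using QP B by simp
    also have "P * B * (B * Q) = P * (B * B) * Q" using P B Q by (simp add: assoc_mult_mat[of _ n n _ n _ n])
    finally show ?thesis .
  qed
  then have "mtr (L * L) = mtr (B * B)" using mtr_sim[OF P _ Q QP, of "B * B"] B by simp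
  also have "\<dots> = (\<Sum>i<n. \<Sum>k<n. B $$ (i,k) * B $$ (k,i))" by (rule mtr_prod[OF B B])
  also have "\<dots> = (\<Sum>i<n. (B $$ (i,i))\<^sup>2)"
  proof (intro sum.cong refl)
    fix i assume i: "i \<in> {..<n}"
    have "(\<Sum>k<n. B $$ (i,k) * B $$ (k,i)) = (\<Sum>k\<in>{i}. B $$ (i,k) * B $$ (k,i))"
    proof (intro sum.mono_neutral_right)
      show "\<forall>k\<in>{..<n} - {i}. B $$ (i,k) * B $$ (k,i) = 0"
      proof
        fix k assume k: "k \<in> {..<n} - {i}"
        show "B $$ (i,k) * B $$ (k,i) = 0"
        proof (cases "k < i")
          case True then show ?thesis using ut i B unfolding upper_triangular_def by auto
        next
          case False then have "i < k" using k by auto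
          then show ?thesis using ut k B unfolding upper_triangular_def by auto
        qed
      qed
    qed (use i in auto)
    then show "(\<Sum>k<n. B $$ (i,k) * B $$ (k,i)) = (B $$ (i,i))\<^sup>2" by (simp add: power2_eq_square)
  qed
  also have "\<dots> = sum_list (map (\<lambda>x. x\<^sup>2) es)" unfolding es by (simp add: sum_list_sum_nth atLeast0LessThan)
  finally show "mtr (L * L) = sum_list (map (\<lambda>x. x\<^sup>2) es)" .
qed

lemma lap_mtr: "mtr (laplacian K F) = (\<Sum>i<K. real (graph_degree K F i)) - (\<Sum>i<K. if F i i then 1 else 0)"
  unfolding mtr_def using lap_carrier[of K F] by (simp add: lap_entry carrier_matD sum_subtractf)

lemma lap_mtr_sg: "simple_graph K F \<Longrightarrow> mtr (laplacian K F) = (\<Sum>i<K. real (graph_degree K F i))"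
  unfolding lap_mtr simple_graph_def by simp

lemma lap_mtr2:
  assumes sg: "simple_graph K F"
  shows "mtr (laplacian K F * laplacian K F) = (\<Sum>i<K. (real (graph_degree K F i))\<^sup>2 + real (graph_degree K F i))"
proof -
  define L where "L = laplacian K F"
  have "mtr (L * L) = (\<Sum>i<K. \<Sum>k<K. L $$ (i,k) * L $$ (k,i))"
    unfolding L_def by (rule mtr_prod[OF lap_carrier lap_carrier])
  also have "\<dots> = (\<Sum>i<K. \<Sum>k<K. (if i = k then (real (graph_degree K F i))\<^sup>2 else 0) + (if F i k then 1 else 0))"
  proof (intro sum.cong refl)
    fix i k assume i: "i \<in> {..<K}" and k: "k \<in> {..<K}"
    have irr: "\<not> F i i" using sg i unfolding simple_graph_def by auto
    have "L $$ (k,i) = L $$ (i,k)" unfolding L_def using lap_sym[OF sg] i k by auto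
    then show "L $$ (i,k) * L $$ (k,i) = (if i = k then (real (graph_degree K F i))\<^sup>2 else 0) + (if F i k then 1 else 0)"
      unfolding L_def using i k irr by (auto simp: lap_entry power2_eq_square)
  qed
  also have "\<dots> = (\<Sum>i<K. (real (graph_degree K F i))\<^sup>2 + real (graph_degree K F i))"
    by (simp add: sum.distrib deg_sum)
  finally show ?thesis unfolding L_def .
qed

lemma cone_simple: "simple_graph N E \<Longrightarrow> simple_graph (N+1) (cone_adj N E)"
  unfolding simple_graph_def cone_adj_def by auto

lemma cone_deg:
  assumes i: "i < N"
  shows "graph_degree (N+1) (cone_adj N E) i = graph_degree N E i + 1"
proof -
  have "{u. u < N + 1 \<and> cone_adj N E i u} = insert N {u. u < N \<and> E i u}"
    using i unfolding cone_adj_def by auto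
  then show ?thesis unfolding graph_degree_def by simp
qed

lemma cone_deg_N: "graph_degree (N+1) (cone_adj N E) N = N"
proof -
  have "{u. u < N + 1 \<and> cone_adj N E N u} = {..<N}" unfolding cone_adj_def by auto
  then show ?thesis unfolding graph_degree_def by simp
qed

lemma cone_deg_sum:
  assumes reg: "regular_graph N E d"
  shows "(\<Sum>i<N+1. real (graph_degree (N+1) (cone_adj N E) i)) = real N * (real d + 1) + real N"
    and "(\<Sum>i<N+1. (real (graph_degree (N+1) (cone_adj N E) i))\<^sup>2 + real (graph_degree (N+1) (cone_adj N E) i))
         = real N * ((real d + 1)\<^sup>2 + (real d + 1)) + (real N)\<^sup>2 + real N"
proof -
  have dg: "graph_degree (N+1) (cone_adj N E) i = d + 1" if "i < N" for i
    using cone_deg[OF that] reg that unfolding regular_graph_def by simp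
  have dgS: "graph_degree (Suc N) (cone_adj N E) i = d + 1" if "i < N" for i using dg[OF that] by simp
  have cNS: "graph_degree (Suc N) (cone_adj N E) N = N" using cone_deg_N[of N E] by simp
  have s1: "(\<Sum>i<N. real (graph_degree (Suc N) (cone_adj N E) i)) = real N * (real d + 1)"
    by (simp add: dgS)
  have s2: "(\<Sum>i<N. (real (graph_degree (Suc N) (cone_adj N E) i))\<^sup>2) = real N * (real d + 1)\<^sup>2"
    by (simp add: dgS)
  show "(\<Sum>i<N+1. real (graph_degree (N+1) (cone_adj N E) i)) = real N * (real d + 1) + real N"
    by (simp add: s1 cNS)
  show "(\<Sum>i<N+1. (real (graph_degree (N+1) (cone_adj N E) i))\<^sup>2 + real (graph_degree (N+1) (cone_adj N E) i))
         = real N * ((real d + 1)\<^sup>2 + (real d + 1)) + (real N)\<^sup>2 + real N"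
    by (simp add: s1 s2 cNS sum.distrib algebra_simps)
qed

lemma cone_eig:
  assumes reg: "regular_graph N E d" and N1: "1 \<le> N"
  shows "poly (char_poly (laplacian (N+1) (cone_adj N E))) (real N + 1) = 0"
proof -
  define L where "L = laplacian (N+1) (cone_adj N E)"
  define w where "w = vec (N+1) (\<lambda>i. if i < N then 1 else - real N)"
  have LK: "L \<in> carrier_mat (N+1) (N+1)" unfolding L_def by (rule lap_carrier)
  have wK: "w \<in> carrier_vec (N+1)" unfolding w_def by simp
  have w0: "w \<noteq> 0\<^sub>v (N+1)"
  proof
    assume "w = 0\<^sub>v (N+1)"
    then have "w $ N = 0" by simp
    then show False using N1 unfolding w_def by simp
  qed
  have dE: "(\<Sum>j<N. if E i j then 1 else 0) = real d" if i: "i < N" for i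
    using deg_sum[of N E i] reg i unfolding regular_graph_def by simp
  have Lw: "L *\<^sub>v w = (real N + 1) \<cdot>\<^sub>v w"
  proof (rule eq_vecI)
    show "dim_vec (L *\<^sub>v w) = dim_vec ((real N + 1) \<cdot>\<^sub>v w)" using LK wK by simp
    fix i assume "i < dim_vec ((real N + 1) \<cdot>\<^sub>v w)"
    then have i: "i < N + 1" using wK by simp
    have "(L *\<^sub>v w) $ i = (\<Sum>j<N+1. L $$ (i,j) * w $ j)"
      using i LK wK by (simp add: mult_mat_vec_def scalar_prod_def atLeast0LessThan)
    also have "\<dots> = (\<Sum>j<N. L $$ (i,j)) + L $$ (i,N) * (- real N)"
      unfolding w_def by simp
    also have "\<dots> = (real N + 1) * w $ i"
    proof (cases "i < N")
      case True
      have "(\<Sum>j<N. L $$ (i,j)) = (\<Sum>j<N. (if i = j then real d + 1 else 0) - (if E i j then 1 else 0))"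
      proof (intro sum.cong refl)
        fix j assume "j \<in> {..<N}"
        then show "L $$ (i,j) = (if i = j then real d + 1 else 0) - (if E i j then 1 else 0)"
          unfolding L_def using True cone_deg[OF True, of E] reg
          by (auto simp: lap_entry cone_adj_def regular_graph_def)
      qed
      also have "\<dots> = 1" using True dE[OF True] by (simp add: sum_subtractf)
      finally have s: "(\<Sum>j<N. L $$ (i,j)) = 1" .
      have "L $$ (i,N) = -1" unfolding L_def using True by (simp add: lap_entry cone_adj_def)
      then show ?thesis using s True unfolding w_def by simp
    next
      case False
      then have iN: "i = N" using i by simp
      have "(\<Sum>j<N. L $$ (i,j)) = (\<Sum>j<N. (-1::real))"
        by (intro sum.cong refl) (auto simp: L_def iN lap_entry cone_adj_def)
      moreover have "L $$ (i,N) = real N" unfolding L_def iN using cone_deg_N[of N E] by (simp add: lap_entry cone_adj_def)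
      ultimately show ?thesis unfolding w_def iN by (simp add: algebra_simps)
    qed
    also have "\<dots> = ((real N + 1) \<cdot>\<^sub>v w) $ i" using i wK by simp
    finally show "(L *\<^sub>v w) $ i = ((real N + 1) \<cdot>\<^sub>v w) $ i" .
  qed
  have "eigenvalue L (real N + 1)"
    unfolding eigenvalue_def eigenvector_def using LK wK w0 Lw by (intro exI[of _ w]) auto
  then show ?thesis using eigenvalue_root_char_poly[OF LK] unfolding L_def by simp
qed

lemma fbound:
  fixes x K :: real assumes x: "0 \<le> x" and K: "0 < K"
  shows "(x - x\<^sup>2 / K) / (1 + K)\<^sup>2 \<le> x / (1 + x)\<^sup>2"
proof (cases "x \<le> K")
  case True
  have "(x - x\<^sup>2 / K) / (1 + K)\<^sup>2 \<le> x / (1 + K)\<^sup>2"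
    using K by (intro divide_right_mono) auto
  also have "\<dots> \<le> x / (1 + x)\<^sup>2"
    using True x by (intro divide_left_mono power_mono mult_pos_pos) auto
  finally show ?thesis .
next
  case False
  then have "x - x\<^sup>2 / K \<le> 0" using K x by (simp add: power2_eq_square field_simps)
  then have "(x - x\<^sup>2 / K) / (1 + K)\<^sup>2 \<le> 0" by (intro divide_nonpos_nonneg) auto
  also have "0 \<le> x / (1 + x)\<^sup>2" using x by simp
  finally show ?thesis .
qed

lemma sum_list_lin: "sum_list (map (\<lambda>x. (x - x\<^sup>2 / K) / C) xs) = (sum_list xs - sum_list (map (\<lambda>x. x\<^sup>2) xs) / K) / (C::real)"
  by (induction xs) (simp_all add: field_simps add_divide_distrib diff_divide_distrib)

lemma list_bound:
  fixes ls :: "real list" and c K :: real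
  assumes nn: "\<And>x. x \<in> set ls \<Longrightarrow> 0 \<le> x" and c: "c \<in> set ls" and K: "0 < K"
  shows "((sum_list ls - c) - (sum_list (map (\<lambda>x. x\<^sup>2) ls) - c\<^sup>2) / K) / (1 + K)\<^sup>2
         \<le> sum_list (map (\<lambda>x. x / (1 + x)\<^sup>2) ls)"
proof -
  define ls' where "ls' = remove1 c ls"
  have s1: "sum_list ls = c + sum_list ls'" unfolding ls'_def using sum_list_map_remove1[OF c, of "\<lambda>x. x"] by simp
  have s2: "sum_list (map (\<lambda>x. x\<^sup>2) ls) = c\<^sup>2 + sum_list (map (\<lambda>x. x\<^sup>2) ls')"
    unfolding ls'_def using sum_list_map_remove1[OF c, of "\<lambda>x. x\<^sup>2"] by simp
  have s3: "sum_list (map (\<lambda>x. x / (1 + x)\<^sup>2) ls) = c / (1 + c)\<^sup>2 + sum_list (map (\<lambda>x. x / (1 + x)\<^sup>2) ls')"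
    unfolding ls'_def using sum_list_map_remove1[OF c, of "\<lambda>x. x / (1 + x)\<^sup>2"] by simp
  have sub: "set ls' \<subseteq> set ls" unfolding ls'_def by (rule set_remove1_subset)
  have "((sum_list ls - c) - (sum_list (map (\<lambda>x. x\<^sup>2) ls) - c\<^sup>2) / K) / (1 + K)\<^sup>2
      = sum_list (map (\<lambda>x. (x - x\<^sup>2 / K) / (1 + K)\<^sup>2) ls')"
    unfolding sum_list_lin s1 s2 by simp
  also have "\<dots> \<le> sum_list (map (\<lambda>x. x / (1 + x)\<^sup>2) ls')"
    by (rule sum_list_mono) (use nn sub K in \<open>auto intro!: fbound\<close>)
  also have "\<dots> \<le> sum_list (map (\<lambda>x. x / (1 + x)\<^sup>2) ls)"
    unfolding s3 using nn[OF c] by simp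
  finally show ?thesis .
qed

lemma cone_spectrum:
  assumes sg: "simple_graph N E" and reg: "regular_graph N E d"
  shows "\<exists>ls. char_poly (laplacian (N+1) (cone_adj N E)) = prod_list (map (\<lambda>r. [:- r, 1:]) ls)
            \<and> length ls = N + 1 \<and> (\<forall>r\<in>set ls. 0 \<le> r)
            \<and> (1 \<le> N \<longrightarrow> (real N * (real d + 1) / 2 - 1) / (2 * real d + 5)\<^sup>2 \<le> sum_list (map (\<lambda>x. x / (1 + x)\<^sup>2) ls))"
proof -
  define L where "L = laplacian (N+1) (cone_adj N E)"
  have sgc: "simple_graph (N+1) (cone_adj N E)" by (rule cone_simple[OF sg])
  obtain ls where ls: "char_poly L = prod_list (map (\<lambda>r. [:- r, 1:]) ls)" "length ls = N + 1" "\<forall>r\<in>set ls. 0 \<le> r"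
    using lap_real_factor[OF sgc] unfolding L_def by blast
  have LK: "L \<in> carrier_mat (N+1) (N+1)" unfolding L_def by (rule lap_carrier)
  have "1 \<le> N \<longrightarrow> (real N * (real d + 1) / 2 - 1) / (2 * real d + 5)\<^sup>2 \<le> sum_list (map (\<lambda>x. x / (1 + x)\<^sup>2) ls)"
  proof
    assume N1: "1 \<le> N"
    have S1: "sum_list ls = real N * (real d + 1) + real N"
      using schur_traces(1)[OF LK ls(1)] lap_mtr_sg[OF sgc] cone_deg_sum(1)[OF reg] unfolding L_def by simp
    have S2: "sum_list (map (\<lambda>x. x\<^sup>2) ls) = real N * ((real d + 1)\<^sup>2 + (real d + 1)) + (real N)\<^sup>2 + real N"
      using schur_traces(2)[OF LK ls(1)] lap_mtr2[OF sgc] cone_deg_sum(2)[OF reg] unfolding L_def by simp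
    have "poly (prod_list (map (\<lambda>r. [:- r, 1:]) ls)) (real N + 1) = 0"
      using cone_eig[OF reg N1] ls(1) unfolding L_def by simp
    then have c: "real N + 1 \<in> set ls" by (auto simp: poly_prod_list_zero_iff)
    define K where "K = 2 * (real d + 2)"
    have K: "0 < K" unfolding K_def by simp
    have "(real N * (real d + 1) / 2 - 1) / (2 * real d + 5)\<^sup>2
        \<le> ((sum_list ls - (real N + 1)) - (sum_list (map (\<lambda>x. x\<^sup>2) ls) - (real N + 1)\<^sup>2) / K) / (1 + K)\<^sup>2"
    proof -
      have e1: "1 + K = 2 * real d + 5" unfolding K_def by simp
      have "real N * (real d + 1) / 2 - 1 \<le> (sum_list ls - (real N + 1)) - (sum_list (map (\<lambda>x. x\<^sup>2) ls) - (real N + 1)\<^sup>2) / K"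
      proof -
        have "sum_list (map (\<lambda>x. x\<^sup>2) ls) - (real N + 1)\<^sup>2 = real N * (real d + 1) * (real d + 2) - real N - 1"
          unfolding S2 by (simp add: power2_eq_square algebra_simps)
        also have "\<dots> \<le> real N * (real d + 1) * (real d + 2)" by simp
        finally have "(sum_list (map (\<lambda>x. x\<^sup>2) ls) - (real N + 1)\<^sup>2) / K \<le> real N * (real d + 1) * (real d + 2) / K"
          using K by (intro divide_right_mono) auto
        also have "\<dots> = real N * (real d + 1) / 2" unfolding K_def by (simp add: field_simps)
        finally show ?thesis unfolding S1 by simp
      qed
      then show ?thesis unfolding e1 by (intro divide_right_mono) auto
    qed
    also have "\<dots> \<le> sum_list (map (\<lambda>x. x / (1 + x)\<^sup>2) ls)"
      by (rule list_bound[OF _ c K]) (use ls(3) in auto)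
    finally show "(real N * (real d + 1) / 2 - 1) / (2 * real d + 5)\<^sup>2 \<le> sum_list (map (\<lambda>x. x / (1 + x)\<^sup>2) ls)" .
  qed
  then show ?thesis using ls unfolding L_def by blast
qed


lemma coeff_Qp_sign:
  "coeff (Qp ls) k = (-1) ^ (length ls + k) * coeff (prod_list (map (\<lambda>r. [:- r, 1:]) ls)) k"
proof (induction ls arbitrary: k)
  case Nil then show ?case by (cases k) (simp_all add: Qp_def coeff_1)
next
  case (Cons r ls)
  let ?P = "prod_list (map (\<lambda>r. [:- r, 1:]) ls)"
  have P': "prod_list (map (\<lambda>r. [:- r, 1:]) (r # ls)) = Polynomial.smult (- r) ?P + pCons 0 ?P"
    by (simp add: mult_pCons_left)
  show ?case
  proof (cases k)
    case 0
    then show ?thesis unfolding P' using Cons.IH[of 0] by (simp add: coeff_Qp_Cons)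
  next
    case (Suc m)
    have "(-1::real) ^ (length (r # ls) + k) = - ((-1) ^ (length ls + k))" using Suc by simp
    moreover have "(-1::real) ^ (length (r # ls) + k) = (-1) ^ (length ls + m)" using Suc by simp
    ultimately show ?thesis unfolding P' using Cons.IH[of k] Cons.IH[of m] Suc by (simp add: coeff_Qp_Cons algebra_simps)
  qed
qed

lemma lap_dist_bdist:
  assumes cp: "char_poly (laplacian K F) = prod_list (map (\<lambda>r. [:- r, 1:]) ls)" and len: "length ls = K"
  shows "lap_dist K F = bdist ls"
proof
  fix k
  have lc: "lap_coeff K F j = coeff (Qp ls) j" if "j \<le> K" for j
  proof -
    have "(-1::real) ^ (K - j) = (-1) ^ (K + j)"
    proof -
      have e: "K + j = (K - j) + 2 * j" using that by simp
      have "(-1::real) ^ (K + j) = (-1) ^ (K - j) * ((-1) ^ 2) ^ j" by (simp only: e power_add power_mult)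
      then show ?thesis by simp
    qed
    then show ?thesis unfolding lap_coeff_def cp coeff_Qp_sign len by simp
  qed
  have "(\<Sum>j\<le>K. lap_coeff K F j) = Pi_r ls" using A0[of ls] len lc by simp
  then show "lap_dist K F k = bdist ls k"
    unfolding lap_dist_def bdist_def len using lc by auto
qed

lemma qvar_qs_of: "(\<And>r. r \<in> set ls \<Longrightarrow> 0 \<le> r) \<Longrightarrow> qvar (qs_of ls) = sum_list (map (\<lambda>x. x / (1 + x)\<^sup>2) ls)"
proof (induction ls)
  case Nil then show ?case by (simp add: qvar_def qs_of_def)
next
  case (Cons r ls)
  have r: "0 \<le> r" using Cons.prems by simp
  have "1 / (1 + r) * (1 - 1 / (1 + r)) = r / (1 + r)\<^sup>2" using r by (simp add: field_simps power2_eq_square)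
  then show ?case using Cons by (simp add: qvar_qs_of_Cons)
qed

theorem corollary2p11:
  fixes d :: nat and nv :: "nat \<Rightarrow> nat" and E :: "nat \<Rightarrow> nat \<Rightarrow> nat \<Rightarrow> bool"
  assumes simple: "\<And>n. simple_graph (nv n) (E n)"
    and regular: "\<And>n. regular_graph (nv n) (E n) d"
    and incr: "strict_mono nv"
  shows "asymp_normal_CLT (\<lambda>n. nv n + 1) (\<lambda>n. lap_dist (nv n + 1) (cone_adj (nv n) (E n)))
           (\<lambda>n. lap_mean (nv n + 1) (cone_adj (nv n) (E n)))
           (\<lambda>n. sqrt (lap_var (nv n + 1) (cone_adj (nv n) (E n))))
       \<and> asymp_normal_LLT (\<lambda>n. lap_dist (nv n + 1) (cone_adj (nv n) (E n)))
           (\<lambda>n. lap_mean (nv n + 1) (cone_adj (nv n) (E n)))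
           (\<lambda>n. sqrt (lap_var (nv n + 1) (cone_adj (nv n) (E n))))"
proof -
  define P where "P n ls \<longleftrightarrow> char_poly (laplacian (nv n + 1) (cone_adj (nv n) (E n))) = prod_list (map (\<lambda>r. [:- r, 1:]) ls)
            \<and> length ls = nv n + 1 \<and> (\<forall>r\<in>set ls. 0 \<le> r)
            \<and> (1 \<le> nv n \<longrightarrow> (real (nv n) * (real d + 1) / 2 - 1) / (2 * real d + 5)\<^sup>2 \<le> sum_list (map (\<lambda>x. x / (1 + x)\<^sup>2) ls))" for n ls
  have "\<forall>n. \<exists>ls. P n ls" unfolding P_def using cone_spectrum[OF simple regular] by blast
  then obtain lsf where lsf: "\<And>n. P n (lsf n)" using choice by metis
  have cp: "char_poly (laplacian (nv n + 1) (cone_adj (nv n) (E n))) = prod_list (map (\<lambda>r. [:- r, 1:]) (lsf n))"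
    and len: "length (lsf n) = nv n + 1"
    and bnd: "1 \<le> nv n \<Longrightarrow> (real (nv n) * (real d + 1) / 2 - 1) / (2 * real d + 5)\<^sup>2 \<le> sum_list (map (\<lambda>x. x / (1 + x)\<^sup>2) (lsf n))"
    for n using lsf[of n] unfolding P_def by auto
  have nn: "\<forall>n. \<forall>r\<in>set (lsf n). 0 \<le> r" using lsf unfolding P_def by blast
  define qs where "qs n = qs_of (lsf n)" for n
  define p where "p n = bdist (lsf n)" for n
  have pd: "lap_dist (nv n + 1) (cone_adj (nv n) (E n)) = p n" for n
    unfolding p_def by (rule lap_dist_bdist[OF cp len])
  have mean: "lap_mean (nv n + 1) (cone_adj (nv n) (E n)) = sum_list (qs n)" for n
    unfolding lap_mean_def pd p_def qs_def using bdist_mean[of "lsf n"] nn len[of n] by simp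
  have var: "lap_var (nv n + 1) (cone_adj (nv n) (E n)) = qvar (qs n)" for n
    unfolding lap_var_def mean pd p_def qs_def using bdist_var[of "lsf n"] nn len[of n] by simp
  have pnn: "0 \<le> p n k" for n k unfolding p_def using bdist_nonneg[of "lsf n"] nn by simp
  have pz: "k < 0 \<or> k > int (nv n + 1) \<Longrightarrow> p n k = 0" for n k
    unfolding p_def using bdist_zero[of "lsf n"] nn len[of n] by simp
  have psum: "(\<Sum>j\<le>nv n + 1. p n (int j)) = 1" for n
    unfolding p_def using bdist_sum[of "lsf n"] nn len[of n] by simp
  have qs01: "q \<in> set (qs n) \<Longrightarrow> 0 \<le> q \<and> q \<le> 1" for n q
    unfolding qs_def using qs_of_01[of "lsf n"] nn by simp
  have charid: "(\<Sum>j\<le>nv n + 1. complex_of_real (p n (int j)) * iexp (real j * t)) = chi (qs n) t" for n t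
    unfolding p_def qs_def using bdist_char[of "lsf n"] nn len[of n] by simp
  have var_inf: "filterlim (\<lambda>n. qvar (qs n)) at_top sequentially"
  proof -
    define a where "a = (real d + 1) / 2 / (2 * real d + 5)\<^sup>2"
    define b where "b = - 1 / (2 * real d + 5)\<^sup>2"
    have a: "0 < a" unfolding a_def by simp
    have g: "filterlim (\<lambda>n. b + a * real n) at_top sequentially"
      by (rule filterlim_tendsto_add_at_top[OF tendsto_const filterlim_tendsto_pos_mult_at_top[OF tendsto_const a filterlim_real_sequentially]])
    have ga: "b + a * x = (x * (real d + 1) / 2 - 1) / (2 * real d + 5)\<^sup>2" for x
      unfolding a_def b_def by (simp add: field_simps)
    show ?thesis
    proof (rule filterlim_at_top_mono[OF g])
      show "eventually (\<lambda>n. b + a * real n \<le> qvar (qs n)) sequentially"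
        using eventually_ge_at_top[of 1]
      proof eventually_elim
        case (elim n)
        have nvn: "n \<le> nv n" using incr by (rule seq_suble)
        then have N1: "1 \<le> nv n" using elim by simp
        have "b + a * real n \<le> b + a * real (nv n)" using a nvn by simp
        also have "\<dots> \<le> sum_list (map (\<lambda>x. x / (1 + x)\<^sup>2) (lsf n))" unfolding ga using bnd[OF N1] .
        also have "\<dots> = qvar (qs n)" unfolding qs_def using qvar_qs_of[of "lsf n"] nn by simp
        finally show ?case .
      qed
    qed
  qed
  have CLT: "asymp_normal_CLT (\<lambda>n. nv n + 1) p (\<lambda>n. sum_list (qs n)) (\<lambda>n. sqrt (qvar (qs n)))"
    unfolding asymp_normal_CLT_def std_normal_cdf_def
    by (rule clt_seq[OF pnn pz psum qs01 charid var_inf])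
  have LLT: "asymp_normal_LLT p (\<lambda>n. sum_list (qs n)) (\<lambda>n. sqrt (qvar (qs n)))"
    unfolding asymp_normal_LLT_def
    by (rule llt_seq[OF pz qs01 charid var_inf])
  show ?thesis unfolding pd mean var using CLT LLT by simp
qed

end
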